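(* For $k$ sufficiently large and every $\ell\in\mathbb Z/D\mathbb Z$, $\gamma^-_{-\ell}=-\gamma^+_\ell$.
   Context: Standing setup. $(E,\omega)$ is a real $2$-dimensional symplectic vector space with a compatible linear complex structure $j$; $K_j=\{\alpha\in E^*\otimes\mathbb C:\alpha(j\cdot)=i\alpha\}$. A half-form line is a complex line $\delta$ with an isomorphism $\varphi:\delta^{\otimes2}\to K_j$; $\delta$ carries the Hermitian metric making $\varphi$ an isometry. For $v\in E\setminus\{0\}$, $\Omega_v$ denotes a vector of $\delta$ with $\varphi(\Omega_v^2)(v)=1$ (unique up to sign). $L\to E$ is the trivial Hermitian line bundle with connection $d-i\alpha$, where $\alpha_x(y)=\frac12\omega(x,y)$, and the compatible holomorphic structure; sections of $L^k\otimes\delta$ are identified with functions $E\to\delta$. For $k\in\mathbb Z_{>0}$ and $x\in E$, $T^*_x$ acts on sections of $L^k\otimes\delta$ by $(T^*_x\Psi)(y)=e^{-\frac{ik}{2}\omega(x,y)}\Psi(x+y)$. For a lattice $\Lambda\subset E$, $\mathcal H^\Lambda_k$ is the space of holomorphic sections $\Psi$ of $L^k\otimes\delta$ with $T^*_x\Psi=\Psi$ for all $x\in\Lambda$, with inner product $\langle\Psi_1,\Psi_2\rangle=\int_F\langle\Psi_1,\Psi_2\rangle_\delta\,|\omega|$ ($F$ a fundamental domain of $\Lambda$). For sequences, $O(k^{-\infty})$ means $O(k^{-N})$ for every $N$. Knot state. Fix relatively prime positive integers $a,b$; $D=2ab$. Fix a basis $(\lambda,\mu)$ of $E$ with $\omega(\mu,\lambda)=4\pi$.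 $\mathcal H_k=\mathcal H_k^{\lambda\mathbb Z\oplus\mu\mathbb Z}$; $M=T^*_{\mu/2k}$, $L=T^*_{-\lambda/2k}$ (operators), $q=e^{i\pi/k}$, $q^{s/D}=e^{i\pi s/(kD)}$. Fix $\Omega_\mu$; $(\xi_\ell)_{\ell\in\mathbb Z/2k\mathbb Z}$ is the orthonormal basis of $\mathcal H_k$ with $M\xi_\ell=q^\ell\xi_\ell$, $L\xi_\ell=\xi_{\ell-1}$, $\xi_0(0)\in\mathbb R_{>0}\Omega_\mu$. For $\ell\ge1$, $J_\ell(t)=\frac{t^{ab(1-\ell^2)}}{t^2-t^{-2}}\sum_{r}t^{4abr^2}\bigl(t^{-4(a+b)r+2}-t^{-4(a-b)r-2}\bigr)$, $r$ running over $-\frac{\ell-1}2,-\frac{\ell-1}2+1,\dots,\frac{\ell-1}2$ (colored Jones polynomials of the $(a,b)$ torus knot); $J_0=0$, $J_{-\ell}=-J_\ell$; $\ell\mapsto J_\ell(-e^{i\pi/2k})$ is $2k$-periodic. The knot state is $Z_k=\frac{\sin(\pi/k)}{\sqrt k}\sum_{\ell\in\mathbb Z/2k\mathbb Z}J_\ell(-e^{i\pi/2k})\xi_\ell$, and $Z^0_k=-\frac{i}{2\sqrt k}\sum_{\ell\in\mathbb Z/2k\mathbb Z}\xi_\ell$. Second lattice. $\Omega_\lambda$ is the (fixed, $k$-independent) choice of sign with $Z^0_k(0)=\frac{e^{3i\pi/4}}{\sqrt2}(\frac{k}{2\pi})^{1/4}\Omega_\lambda+O(k^{-\infty})$. $R_D=D\mu\mathbb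 Z\oplus\lambda\mathbb Z$, $\mathcal H_{D,k}=\mathcal H_k^{R_D}\supset\mathcal H_k$ ($\dim=2kD$). $S=T^*_{-\lambda/2kD}$, $R=T^*_{(D\mu-2\lambda)/2kD}$. $(\Psi_n)_{n\in\mathbb Z/2kD\mathbb Z}$ is the orthonormal basis of $\mathcal H_{D,k}$ with $S\Psi_n=q^{n/D}\Psi_n$, $R\Psi_n=\Psi_{n+1}$ and phase such that $\Psi_0(0)=e^{i\pi/4}(\frac k{2\pi})^{1/4}\Omega_\lambda+O(k^{-\infty})$. $\Phi_\ell=\frac1{\sqrt{2kD}}\sum_{n\in\mathbb Z/2kD\mathbb Z}e^{2i\pi n\ell/D}\Psi_n$ ($\ell\in\mathbb Z/D\mathbb Z$). $E_{k,+}$ (resp. $E_{k,-}$) is the span of the $\Psi_n$ with $-ab+a+b\le n<2k-ab-a-b$ (resp. $-2k-ab+a+b\le n<-ab-a-b$); $\perp$ is the orthogonal complement in $\mathcal H_{D,k}$. For $k$ large, $\gamma^\pm_\ell$ ($\ell\in\mathbb Z/D\mathbb Z$) are the unique complex numbers with $Z_k-\sum_\ell\gamma^\pm_\ell\Phi_\ell\in E_{k,\pm}^\perp$. *)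

theory Defs
  imports "HOL-Analysis.Analysis"
begin

text \<open>E is the complex plane (type complex, viewed as a
real 2-dimensional space) with j = multiplication by i and the symplectic form
omg x y = Im (cnj x * y), which is compatible with j.  Every (E, omega, j) as in the
paper is linearly isomorphic to this model, and the lattice basis (lam, mu) is
arbitrary subject to omg mu lam = 4 pi.

K_j = complex-linear forms on E = {z |-> c z}; its Hermitian metric is the one induced
by the compatible metric g = omega(., j .): |alpha|^2 = |alpha(1)|^2 + |alpha(i)|^2, so
|c dz|^2 = 2 |c|^2.  The half-form line is delta = C with phi(u (x) u) = u^2 dz; the
metric making phi an isometry is <u,v>_delta = sqrt 2 * u * cnj v.  A vector Omega_v of
delta with phi(Omega_v^2)(v) = 1 is a complex number with Omega_v^2 * v = 1.\<close>

definition omg :: "complex \<Rightarrow> complex \<Rightarrow> real" where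
  "omg x y = Im (cnj x * y)"

definition Tstar :: "nat \<Rightarrow> complex \<Rightarrow> (complex \<Rightarrow> complex) \<Rightarrow> complex \<Rightarrow> complex" where
  "Tstar k x \<Psi> = (\<lambda>y. exp (- \<i> * complex_of_real (real k / 2 * omg x y)) * \<Psi> (x + y))"

text \<open>Covariant derivative of a section of L^k (x) delta for the connection d - i k alpha,
alpha_y(v) = omega(y,v)/2.\<close>
definition cov_der :: "nat \<Rightarrow> (complex \<Rightarrow> complex) \<Rightarrow> complex \<Rightarrow> complex \<Rightarrow> complex" where
  "cov_der k \<Psi> y v = frechet_derivative \<Psi> (at y) v
      - \<i> * complex_of_real (real k * omg y v / 2) * \<Psi> y"

text \<open>Holomorphic sections for the compatible holomorphic structure: nabla^(0,1) = 0,
i.e. nabla_(j v) = i nabla_v.\<close>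
definition holo_sec :: "nat \<Rightarrow> (complex \<Rightarrow> complex) \<Rightarrow> bool" where
  "holo_sec k \<Psi> \<longleftrightarrow> (\<forall>y. \<Psi> differentiable (at y))
      \<and> (\<forall>y v. cov_der k \<Psi> y (\<i> * v) = \<i> * cov_der k \<Psi> y v)"

definition delta_inner :: "complex \<Rightarrow> complex \<Rightarrow> complex" where
  "delta_inner u v = complex_of_real (sqrt 2) * u * cnj v"

definition is_Omega :: "complex \<Rightarrow> complex \<Rightarrow> bool" where
  "is_Omega v \<Omega> \<longleftrightarrow> \<Omega>\<^sup>2 * v = 1"

definition lattice :: "complex \<Rightarrow> complex \<Rightarrow> complex set" where
  "lattice u v = {of_int m * u + of_int n * v | m n. True}"

definition fund_dom :: "complex \<Rightarrow> complex \<Rightarrow> complex set" where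
  "fund_dom u v = {complex_of_real s * u + complex_of_real t * v | s t.
       0 \<le> s \<and> s < 1 \<and> 0 \<le> t \<and> t < 1}"

definition sec_space :: "nat \<Rightarrow> complex \<Rightarrow> complex \<Rightarrow> (complex \<Rightarrow> complex) set" where
  "sec_space k u v = {\<Psi>. holo_sec k \<Psi> \<and> (\<forall>x\<in>lattice u v. Tstar k x \<Psi> = \<Psi>)}"

definition sec_inner :: "complex \<Rightarrow> complex \<Rightarrow> (complex \<Rightarrow> complex) \<Rightarrow> (complex \<Rightarrow> complex) \<Rightarrow> complex" where
  "sec_inner u v \<Psi>1 \<Psi>2 = (LINT z : fund_dom u v | lborel. delta_inner (\<Psi>1 z) (\<Psi>2 z))"

text \<open>An orthonormal basis of V indexed by Z/NZ (represented as an N-periodic family on int).\<close>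
definition onb_family :: "(complex \<Rightarrow> complex) set \<Rightarrow>
    ((complex \<Rightarrow> complex) \<Rightarrow> (complex \<Rightarrow> complex) \<Rightarrow> complex) \<Rightarrow> nat \<Rightarrow>
    (int \<Rightarrow> complex \<Rightarrow> complex) \<Rightarrow> bool" where
  "onb_family V ip N e \<longleftrightarrow> (\<forall>i. e (i + int N) = e i) \<and> (\<forall>i. e i \<in> V)
     \<and> (\<forall>i\<in>{0..<int N}. \<forall>j\<in>{0..<int N}. ip (e i) (e j) = (if i = j then 1 else 0))
     \<and> (\<forall>\<Psi>\<in>V. \<exists>c. \<Psi> = (\<lambda>z. \<Sum>i\<in>{0..<int N}. c i * e i z))"

definition neg_k_infty :: "(nat \<Rightarrow> complex) \<Rightarrow> bool" where
  "neg_k_infty f \<longleftrightarrow> (\<forall>N::nat. \<exists>C K. \<forall>k\<ge>K. norm (f k) \<le> C * real k powr (- real N))"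

text \<open>Colored Jones polynomials of the (a,b) torus knot; r = s/2 with
s = 2j - l + 1, j = 0..l-1.\<close>
definition jones_pos :: "nat \<Rightarrow> nat \<Rightarrow> nat \<Rightarrow> complex \<Rightarrow> complex" where
  "jones_pos a b l t = t powi (int (a*b) * (1 - (int l)\<^sup>2)) / (t\<^sup>2 - t powi (-2)) *
     (\<Sum>j<l. let s = 2 * int j - int l + 1 in
        t powi (int (a*b) * s\<^sup>2) *
        (t powi (- 2 * (int a + int b) * s + 2) - t powi (- 2 * (int a - int b) * s - 2)))"

definition jones :: "nat \<Rightarrow> nat \<Rightarrow> int \<Rightarrow> complex \<Rightarrow> complex" where
  "jones a b l t = (if l > 0 then jones_pos a b (nat l) t
                    else if l = 0 then 0 else - jones_pos a b (nat (- l)) t)"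

definition xi_basis :: "complex \<Rightarrow> complex \<Rightarrow> complex \<Rightarrow> nat \<Rightarrow> (int \<Rightarrow> complex \<Rightarrow> complex) \<Rightarrow> bool" where
  "xi_basis lam mu Om_mu k \<xi> \<longleftrightarrow>
     onb_family (sec_space k lam mu) (sec_inner lam mu) (2 * k) \<xi>
     \<and> (\<forall>l. Tstar k (mu / of_nat (2 * k)) (\<xi> l)
              = (\<lambda>z. exp (\<i> * of_real pi * of_int l / of_nat k) * \<xi> l z))
     \<and> (\<forall>l. Tstar k (- lam / of_nat (2 * k)) (\<xi> l) = \<xi> (l - 1))
     \<and> (\<exists>r>0. \<xi> 0 0 = complex_of_real r * Om_mu)"

definition knot_state :: "nat \<Rightarrow> nat \<Rightarrow> nat \<Rightarrow> (int \<Rightarrow> complex \<Rightarrow> complex) \<Rightarrow> complex \<Rightarrow> complex" where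
  "knot_state a b k \<xi> = (\<lambda>z. complex_of_real (sin (pi / real k) / sqrt (real k)) *
      (\<Sum>l\<in>{0..<2 * int k}. jones a b l (- exp (\<i> * of_real pi / of_nat (2 * k))) * \<xi> l z))"

definition knot_state0 :: "nat \<Rightarrow> (int \<Rightarrow> complex \<Rightarrow> complex) \<Rightarrow> complex \<Rightarrow> complex" where
  "knot_state0 k \<xi> = (\<lambda>z. - \<i> / (2 * complex_of_real (sqrt (real k))) *
      (\<Sum>l\<in>{0..<2 * int k}. \<xi> l z))"

definition psi_basis :: "nat \<Rightarrow> complex \<Rightarrow> complex \<Rightarrow> nat \<Rightarrow> (int \<Rightarrow> complex \<Rightarrow> complex) \<Rightarrow> bool" where
  "psi_basis D lam mu k \<Psi> \<longleftrightarrow>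
     onb_family (sec_space k (of_nat D * mu) lam) (sec_inner (of_nat D * mu) lam) (2 * k * D) \<Psi>
     \<and> (\<forall>n. Tstar k (- lam / of_nat (2 * k * D)) (\<Psi> n)
              = (\<lambda>z. exp (\<i> * of_real pi * of_int n / of_nat (k * D)) * \<Psi> n z))
     \<and> (\<forall>n. Tstar k ((of_nat D * mu - 2 * lam) / of_nat (2 * k * D)) (\<Psi> n) = \<Psi> (n + 1))"

definition Phi :: "nat \<Rightarrow> nat \<Rightarrow> (int \<Rightarrow> complex \<Rightarrow> complex) \<Rightarrow> int \<Rightarrow> complex \<Rightarrow> complex" where
  "Phi D k \<Psi> l = (\<lambda>z. 1 / complex_of_real (sqrt (real (2 * k * D))) *
      (\<Sum>n\<in>{0..<int (2 * k * D)}. exp (2 * \<i> * of_real pi * of_int n * of_int l / of_nat D) * \<Psi> n z))"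

definition gamma_cond :: "nat \<Rightarrow> complex \<Rightarrow> complex \<Rightarrow> nat \<Rightarrow> (complex \<Rightarrow> complex) \<Rightarrow>
    (int \<Rightarrow> complex \<Rightarrow> complex) \<Rightarrow> int \<Rightarrow> int \<Rightarrow> (int \<Rightarrow> complex) \<Rightarrow> bool" where
  "gamma_cond D lam mu k Z \<Psi> lo hi g \<longleftrightarrow>
     (\<forall>n. lo \<le> n \<and> n < hi \<longrightarrow>
        sec_inner (of_nat D * mu) lam
          (\<lambda>z. Z z - (\<Sum>l\<in>{0..<int D}. g l * Phi D k \<Psi> l z)) (\<Psi> n) = 0)"

end

theory Submission
  imports Defs "HOL-Number_Theory.Cong"
begin

lemma omg_add_right: "omg x (y + z) = omg x y + omg x z"
  by (simp add: omg_def algebra_simps)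
lemma omg_add_left: "omg (x + y) z = omg x z + omg y z"
  by (simp add: omg_def algebra_simps)
lemma omg_minus_left: "omg (- x) y = - omg x y"
  by (simp add: omg_def)
lemma omg_minus_right: "omg x (- y) = - omg x y"
  by (simp add: omg_def)
lemma omg_self: "omg x x = 0"
  by (simp add: omg_def)
lemma omg_scaleR_right: "omg x (of_real r * y) = r * omg x y"
  by (simp add: omg_def algebra_simps)

lemma Tstar_inv: "Tstar k x (Tstar k (- x) f) = f"
proof
  fix y
  have "Tstar k x (Tstar k (- x) f) y
     = exp (- \<i> * complex_of_real (real k / 2 * omg x y)) *
       (exp (- \<i> * complex_of_real (real k / 2 * omg (-x) (x + y))) * f (-x + (x + y)))"
    by (simp add: Tstar_def)
  also have "omg (-x) (x + y) = - omg x y"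
    by (simp add: omg_minus_left omg_add_right omg_self)
  also have "exp (- \<i> * complex_of_real (real k / 2 * omg x y)) *
       (exp (- \<i> * complex_of_real (real k / 2 * - omg x y)) * f (-x + (x + y)))
     = exp (- \<i> * complex_of_real (real k / 2 * omg x y) + - \<i> * complex_of_real (real k / 2 * - omg x y)) * f y"
    by (simp only: mult_exp_exp mult.assoc[symmetric]) simp
  also have "\<dots> = f y" by simp
  finally show "Tstar k x (Tstar k (- x) f) y = f y" .
qed

lemma Tstar_inv': "Tstar k (- x) (Tstar k x f) = f"
  using Tstar_inv[of k "-x" f] by simp

lemma Tstar_scale: "Tstar k x (\<lambda>z. c * f z) = (\<lambda>z. c * Tstar k x f z)"
  by (auto simp: Tstar_def)

lemma Tstar_sum: "Tstar k x (\<lambda>z. \<Sum>i\<in>A. d i * f i z) = (\<lambda>z. \<Sum>i\<in>A. d i * Tstar k x (f i) z)"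
  by (auto simp: Tstar_def sum_distrib_left sum_distrib_right mult_ac)

lemma Tstar_par: "Tstar k x (\<lambda>z. f (- z)) = (\<lambda>z. Tstar k (- x) f (- z))"
  by (auto simp: Tstar_def omg_minus_left omg_minus_right algebra_simps)

lemma Tstar_eigen_inv:
  assumes "Tstar k x f = (\<lambda>z. c * f z)" "c \<noteq> 0"
  shows "Tstar k (- x) f = (\<lambda>z. inverse c * f z)"
proof -
  have "f = Tstar k (- x) (Tstar k x f)" by (simp add: Tstar_inv')
  also have "\<dots> = (\<lambda>z. c * Tstar k (- x) f z)" using assms(1) Tstar_scale by simp
  finally have "\<And>z. f z = c * Tstar k (- x) f z" by metis
  then show ?thesis using assms(2) by (auto simp: field_simps)
qed

lemma periodic_mult:
  fixes e :: "int \<Rightarrow> 'a"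
  assumes "\<forall>i. e (i + N) = e i"
  shows "e (i + N * m) = e i"
proof (induction m rule: int_induct[where k=0])
  case base then show ?case by simp
next
  case (step1 m) then show ?case using assms by (metis add.assoc distrib_left mult.right_neutral)
next
  case (step2 m)
  have "e (i + N * (m - 1)) = e (i + N * (m - 1) + N)" using assms by metis
  also have "\<dots> = e (i + N * m)" by (simp add: algebra_simps)
  finally show ?case using step2 by simp
qed

lemma periodic_mod:
  fixes e :: "int \<Rightarrow> 'a"
  assumes "\<forall>i. e (i + N) = e i"
  shows "e (i mod N) = e i"
proof -
  have "e (i mod N + N * (i div N)) = e (i mod N)" by (rule periodic_mult[OF assms])
  then show ?thesis by simp
qed

lemma split_modulus:
  fixes K a :: int
  assumes "K > 0"
  shows "\<exists>K1 K2 n. K = K1 * K2 \<and> K1 dvd a ^ n \<and> coprime K2 a"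
  using assms
proof (induction "nat K" arbitrary: K rule: less_induct)
  case less
  show ?case
  proof (cases "coprime K a")
    case True
    then show ?thesis by (rule_tac x=1 in exI, rule_tac x=K in exI, rule_tac x=0 in exI) simp
  next
    case False
    define g where "g = gcd K a"
    have g0: "g \<ge> 0" by (simp add: g_def)
    have "g \<noteq> 1" using False by (simp add: g_def coprime_iff_gcd_eq_1)
    moreover have "g \<noteq> 0" using less.prems by (simp add: g_def)
    ultimately have g2: "g > 1" using g0 by linarith
    have gK: "g dvd K" by (simp add: g_def)
    then obtain K' where K': "K = g * K'" by blast
    have "K' > 0" using K' less.prems g2 by (simp add: zero_less_mult_iff)
    moreover have "nat K' < nat K" using K' g2 \<open>K' > 0\<close> by (simp add: nat_less_eq_zless)
    ultimately obtain K1 K2 n where IH: "K' = K1 * K2" "K1 dvd a ^ n" "coprime K2 a"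
      using less.hyps by blast
    have "g * K1 dvd a * a ^ n" using IH(2) by (simp add: g_def mult_dvd_mono)
    then have "g * K1 dvd a ^ Suc n" by simp
    then show ?thesis using K' IH by (rule_tac x="g*K1" in exI, rule_tac x=K2 in exI, rule_tac x="Suc n" in exI) (simp add: mult.assoc)
  qed
qed

lemma pq_exists:
  fixes a b K :: int
  assumes "coprime a b" "K > 0" "even K"
  shows "\<exists>p q. a * q - b * p = 2 \<and> K dvd p * q \<and> even (p + q)"
proof -
  obtain K1 K2 n where KK: "K = K1 * K2" "K1 dvd a ^ n" "coprime K2 a"
    using split_modulus[OF assms(2)] by blast
  have cK1b: "coprime K1 b" using coprime_divisors[OF KK(2) dvd_refl[of b]] assms(1) by simp
  have cK1K2: "coprime K1 K2" using coprime_divisors[OF KK(2) dvd_refl[of K2]] KK(3) by (simp add: coprime_commute)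
  obtain u v where uv: "u * a + v * b = 1" using bezout_int[of a b] assms(1) by (auto simp: coprime_iff_gcd_eq_1)
  define x where "x = u" define y where "y = - v"
  have xy: "a * x - b * y = 1" using uv by (simp add: x_def y_def algebra_simps)
  obtain ia where ia: "[a * ia = 1] (mod K2)" using cong_solve_coprime_int[of a K2] KK(3) by (auto simp: coprime_commute)
  obtain ib where ib: "[b * ib = 1] (mod K1)" using cong_solve_coprime_int[of b K1] cK1b by (auto simp: coprime_commute)
  obtain j where j: "[j = -2*x*ib] (mod K1)" "[j = -2*y*ia] (mod K2)"
    using binary_chinese_remainder_int[OF cK1K2] by blast
  define p where "p = 2 * y + a * j"
  define q where "q = 2 * x + b * j"
  have "[a * j = a * (-2*y*ia)] (mod K2)" by (rule cong_scalar_left[OF j(2)])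
  moreover have "[a * (-2*y*ia) = -2*y * (a * ia)] (mod K2)" by (simp add: algebra_simps)
  moreover have "[-2*y * (a * ia) = -2*y * 1] (mod K2)" by (rule cong_scalar_left[OF ia])
  ultimately have "[a * j = -2*y] (mod K2)" by (metis cong_trans mult.right_neutral)
  then have dp: "K2 dvd p" unfolding p_def by (simp add: cong_iff_dvd_diff algebra_simps)
  have "[b * j = b * (-2*x*ib)] (mod K1)" by (rule cong_scalar_left[OF j(1)])
  moreover have "[b * (-2*x*ib) = -2*x * (b * ib)] (mod K1)" by (simp add: algebra_simps)
  moreover have "[-2*x * (b * ib) = -2*x * 1] (mod K1)" by (rule cong_scalar_left[OF ib])
  ultimately have "[b * j = -2*x] (mod K1)" by (metis cong_trans mult.right_neutral)
  then have dq: "K1 dvd q" unfolding q_def by (simp add: cong_iff_dvd_diff algebra_simps)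
  have eq: "a * q - b * p = 2" using xy by (simp add: p_def q_def algebra_simps)
  have dv: "K dvd p * q" using mult_dvd_mono[OF dq dp] KK(1) by (simp add: mult.commute)
  have ev: "even (p + q)"
  proof (cases "even a")
    case True
    then have "odd b" using assms(1) coprime_common_divisor[of a b 2] by auto
    have "odd K2" using True KK(3) coprime_common_divisor[of K2 a 2] by auto
    then have "even K1" using KK(1) assms(3) by simp
    then have "even q" using dq by (meson dvd_trans)
    have "b * p = a * q - 2" using eq by simp
    then have "even (b * p)" using True by simp
    then have "even p" using \<open>odd b\<close> by simp
    then show ?thesis using \<open>even q\<close> by simp
  next
    case False
    show ?thesis
    proof (cases "even b")
      case True
      have "odd K1" using True cK1b coprime_common_divisor[of K1 b 2] by auto
      then have "even K2" using KK(1) assms(3) by simp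
      then have "even p" using dp by (meson dvd_trans)
      have "a * q = b * p + 2" using eq by simp
      then have "even (a * q)" using \<open>even p\<close> by simp
      then have "even q" using False by simp
      then show ?thesis using \<open>even p\<close> by simp
    next
      case bo: False
      have "even (a * q - b * p)" using eq by simp
      then show ?thesis using False bo by auto
    qed
  qed
  show ?thesis using eq dv ev by blast
qed

lemma sum_reindex_unit:
  fixes f :: "int \<Rightarrow> 'a::comm_monoid_add"
  assumes n: "n > 0" and per: "\<forall>i. f (i + n) = f i" and cop: "coprime u n"
  shows "(\<Sum>i\<in>{0..<n}. f (u * i + v)) = (\<Sum>i\<in>{0..<n}. f i)"
proof -
  define h where "h i = (u * i + v) mod n" for i
  have inj: "inj_on h {0..<n}"
  proof
    fix i j assume ij: "i \<in> {0..<n}" "j \<in> {0..<n}" "h i = h j"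
    then have "[u * i + v = u * j + v] (mod n)" by (simp add: h_def cong_def)
    then have "n dvd u * (i - j)" by (simp add: cong_iff_dvd_diff algebra_simps)
    then have "n dvd (i - j)" using cop by (metis coprime_commute coprime_dvd_mult_right_iff)
    then show "i = j" using ij(1,2)
      by (metis atLeastLessThan_iff cong_iff_dvd_diff unique_euclidean_semiring_class.cong_def mod_pos_pos_trivial)
  qed
  have img: "h ` {0..<n} = {0..<n}"
  proof (rule card_subset_eq)
    show "h ` {0..<n} \<subseteq> {0..<n}" using n by (auto simp: h_def)
    show "card (h ` {0..<n}) = card {0..<n}" using inj by (simp add: card_image)
  qed simp
  have "(\<Sum>i\<in>{0..<n}. f (u * i + v)) = (\<Sum>i\<in>{0..<n}. f (h i))"
    by (simp add: h_def periodic_mod[OF per])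
  also have "\<dots> = (\<Sum>i\<in>h ` {0..<n}. f i)"
    using sum.reindex[OF inj, of f] by simp
  also have "\<dots> = (\<Sum>i\<in>{0..<n}. f i)" using img by simp
  finally show ?thesis .
qed

definition tt :: "nat \<Rightarrow> complex" where
  "tt k = - exp (\<i> * of_real pi / of_nat (2 * k))"

lemma tt_nonzero: "tt k \<noteq> 0" by (simp add: tt_def)

lemma tt_pow: assumes "k > 0" shows "tt k ^ (4 * k) = 1"
proof -
  have "exp (\<i> * of_real pi / of_nat (2 * k)) ^ (4 * k) = exp (of_nat (4 * k) * (\<i> * of_real pi / of_nat (2 * k)))"
    by (rule exp_of_nat_mult[symmetric])
  also have "of_nat (4 * k) * (\<i> * of_real pi / of_nat (2 * k)) = 2 * pi * \<i>"
    using assms by (simp add: field_simps)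
  also have "exp (2 * pi * \<i>) = 1" by simp
  finally have e: "exp (\<i> * of_real pi / of_nat (2 * k)) ^ (4 * k) = 1" .
  have "tt k ^ (4 * k) = (-1) ^ (4 * k) * exp (\<i> * of_real pi / of_nat (2 * k)) ^ (4 * k)"
    by (simp add: tt_def power_mult_distrib[symmetric])
  then show ?thesis using e by simp
qed

lemma powi_cong:
  fixes t :: complex
  assumes "t \<noteq> 0" "t ^ M = 1" "int M dvd (x - y)"
  shows "t powi x = t powi y"
proof -
  obtain m where m: "x - y = int M * m" using assms(3) by blast
  have "t powi x = t powi (y + int M * m)" using m by (simp add: algebra_simps)
  also have "\<dots> = t powi y * (t powi int M) powi m" using assms(1) by (simp add: power_int_add power_int_mult)
  also have "\<dots> = t powi y" using assms(2) by simp
  finally show ?thesis .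
qed

definition TT :: "nat \<Rightarrow> nat \<Rightarrow> complex \<Rightarrow> int \<Rightarrow> complex" where
  "TT a b t s = t powi (int (a*b) * s\<^sup>2) *
        (t powi (- 2 * (int a + int b) * s + 2) - t powi (- 2 * (int a - int b) * s - 2))"

lemma TT_eq: assumes "t \<noteq> 0"
  shows "TT a b t s = t powi (int (a*b) * s\<^sup>2 - 2 * (int a + int b) * s + 2)
                     - t powi (int (a*b) * s\<^sup>2 - 2 * (int a - int b) * s - 2)"
  using assms by (simp add: TT_def right_diff_distrib power_int_add[symmetric] algebra_simps)

lemma key_identity:
  fixes a b p q s :: int
  assumes "a * q - b * p = 2"
  shows "(a * b * s ^ 2 - 2 * (a + b) * s + 2) - (a * b * ((1 + b * p) * s - (p + q)) ^ 2 - 2 * (a - b) * ((1 + b * p) * s - (p + q)) - 2)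
         = - (p * q) * (a * b * s - a - b) ^ 2"
proof -
  have "(a * b * s ^ 2 - 2 * (a + b) * s + 2) - (a * b * ((1 + b * p) * s - (p + q)) ^ 2 - 2 * (a - b) * ((1 + b * p) * s - (p + q)) - 2)
         - (- (p * q) * (a * b * s - a - b) ^ 2)
        = (a * q - b * p - 2) * (- b * q + 2 * b * s - 2 + a * b^2 * p * s^2 - 2 * a * b * p * s + a * p)"
    by (simp add: power2_eq_square algebra_simps)
  then show ?thesis using assms by simp
qed

lemma full_sum_zero:
  fixes a b k :: nat and t :: complex and \<sigma> :: int
  assumes k: "k > 0" and t0: "t \<noteq> 0" and t4: "t ^ (4 * k) = 1" and cop: "coprime a b"
  shows "(\<Sum>i\<in>{0..<2 * int k}. TT a b t (2 * i + \<sigma>)) = 0"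
proof -
  define A where "A = int a" define B where "B = int b"
  have copAB: "coprime A B" using cop by (simp add: A_def B_def)
  obtain p q where pq: "A * q - B * p = 2" "4 * int k dvd p * q" "even (p + q)"
    using pq_exists[OF copAB, of "4 * int k"] k by auto
  define w where "w = 1 + B * p"
  define c where "c = - (p + q)"
  define E1 where "E1 s = A * B * s ^ 2 - 2 * (A + B) * s + 2" for s
  define E2 where "E2 s = A * B * s ^ 2 - 2 * (A - B) * s - 2" for s
  have TTe: "TT a b t s = t powi E1 s - t powi E2 s" for s
    using TT_eq[OF t0, of a b s] by (simp add: E1_def E2_def A_def B_def power2_eq_square)
  have M: "int (4 * k) = 4 * int k" by simp
  have key: "t powi E1 s = t powi E2 (w * s + c)" for s
  proof (rule powi_cong[OF t0 t4])
    have wc: "w * s + c = (1 + B * p) * s - (p + q)" by (simp add: w_def c_def)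
    have "E1 s - E2 (w * s + c) = - (p * q) * (A * B * s - A - B) ^ 2"
      unfolding wc E1_def E2_def by (rule key_identity[OF pq(1)])
    then show "int (4 * k) dvd E1 s - E2 (w * s + c)" using pq(2) by (simp add: M)
  qed
  have w2: "w * w - 1 = (B * p) * (A * q)" using pq(1) by (simp add: w_def algebra_simps)
  have BA: "(B * p) * (A * q) = (A * B) * (p * q)" by (simp add: algebra_simps)
  have dw: "4 * int k dvd w * w - 1" unfolding w2 BA by (rule dvd_mult[OF pq(2)])
  have d24: "2 * int k dvd 4 * int k" by (rule dvd_mult_right[of 2]) simp
  have "2 * int k dvd w * w - 1" by (rule dvd_trans[OF d24 dw])
  then have "[w * w = 1] (mod 2 * int k)" by (simp add: cong_iff_dvd_diff)
  then have copw: "coprime w (2 * int k)" by (metis coprime_iff_invertible_int)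
  have "(2::int) dvd 4 * int k" by simp
  then have "even (w * w - 1)" using dw by (rule dvd_trans)
  then have wodd: "odd w" by auto
  have ev: "even ((w - 1) * \<sigma> + c)" using wodd pq(3) by (simp add: c_def)
  define v where "v = ((w - 1) * \<sigma> + c) div 2"
  have v2: "2 * v = (w - 1) * \<sigma> + c" using ev by (simp add: v_def)
  define f where "f i = t powi E2 (2 * i + \<sigma>)" for i
  have fper: "\<forall>i. f (i + 2 * int k) = f i"
  proof
    fix i
    show "f (i + 2 * int k) = f i" unfolding f_def
    proof (rule powi_cong[OF t0 t4])
      have "E2 (2 * (i + 2 * int k) + \<sigma>) - E2 (2 * i + \<sigma>)
            = 4 * int k * (A * B * (4 * i + 2 * \<sigma> + 4 * int k) - 2 * (A - B))"
        by (simp add: E2_def power2_eq_square algebra_simps)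
      then show "int (4 * k) dvd E2 (2 * (i + 2 * int k) + \<sigma>) - E2 (2 * i + \<sigma>)" by simp
    qed
  qed
  have "(\<Sum>i\<in>{0..<2 * int k}. t powi E1 (2 * i + \<sigma>)) = (\<Sum>i\<in>{0..<2 * int k}. f (w * i + v))"
  proof (rule sum.cong[OF refl])
    fix i
    have "w * (2 * i + \<sigma>) + c = 2 * (w * i + v) + \<sigma>" using v2 by (simp add: algebra_simps)
    then show "t powi E1 (2 * i + \<sigma>) = f (w * i + v)" by (simp add: key f_def)
  qed
  also have "\<dots> = (\<Sum>i\<in>{0..<2 * int k}. f i)"
    by (rule sum_reindex_unit) (use k fper copw in auto)
  finally have "(\<Sum>i\<in>{0..<2 * int k}. t powi E1 (2 * i + \<sigma>)) = (\<Sum>i\<in>{0..<2 * int k}. t powi E2 (2 * i + \<sigma>))"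
    by (simp add: f_def)
  then show ?thesis by (simp add: TTe sum_subtractf)
qed

lemma TT_per:
  assumes k: "k > 0"
  shows "TT a b (tt k) (s + 2 * int k) = TT a b (tt k) s"
proof -
  have t0: "tt k \<noteq> 0" by (rule tt_nonzero)
  have t4: "tt k ^ (4 * k) = 1" by (rule tt_pow[OF k])
  have 1: "tt k powi (int (a*b) * (s + 2 * int k)\<^sup>2 - 2 * (int a + int b) * (s + 2 * int k) + 2)
         = tt k powi (int (a*b) * s\<^sup>2 - 2 * (int a + int b) * s + 2)"
  proof (rule powi_cong[OF t0 t4])
    have "(int (a*b) * (s + 2 * int k)\<^sup>2 - 2 * (int a + int b) * (s + 2 * int k) + 2)
          - (int (a*b) * s\<^sup>2 - 2 * (int a + int b) * s + 2) = int (4 * k) * (int (a*b) * (s + int k) - (int a + int b))"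
      by (simp add: power2_eq_square algebra_simps)
    then show "int (4 * k) dvd (int (a*b) * (s + 2 * int k)\<^sup>2 - 2 * (int a + int b) * (s + 2 * int k) + 2)
          - (int (a*b) * s\<^sup>2 - 2 * (int a + int b) * s + 2)" by (metis dvd_triv_left)
  qed
  have 2: "tt k powi (int (a*b) * (s + 2 * int k)\<^sup>2 - 2 * (int a - int b) * (s + 2 * int k) - 2)
         = tt k powi (int (a*b) * s\<^sup>2 - 2 * (int a - int b) * s - 2)"
  proof (rule powi_cong[OF t0 t4])
    have "(int (a*b) * (s + 2 * int k)\<^sup>2 - 2 * (int a - int b) * (s + 2 * int k) - 2)
          - (int (a*b) * s\<^sup>2 - 2 * (int a - int b) * s - 2) = int (4 * k) * (int (a*b) * (s + int k) - (int a - int b))"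
      by (simp add: power2_eq_square algebra_simps)
    then show "int (4 * k) dvd (int (a*b) * (s + 2 * int k)\<^sup>2 - 2 * (int a - int b) * (s + 2 * int k) - 2)
          - (int (a*b) * s\<^sup>2 - 2 * (int a - int b) * s - 2)" by (metis dvd_triv_left)
  qed
  show ?thesis using 1 2 by (simp add: TT_eq[OF t0])
qed

lemma jones_pos_TT:
  "jones_pos a b l t = t powi (int (a*b) * (1 - (int l)\<^sup>2)) / (t\<^sup>2 - t powi (-2)) *
     (\<Sum>j<l. TT a b t (2 * int j - int l + 1))"
  by (simp add: jones_pos_def TT_def Let_def)

lemma jones_anti:
  assumes k: "k > 0" and m: "0 < m" "m < 2 * k" and cop: "coprime a b"
  shows "jones_pos a b (2 * k - m) (tt k) = - jones_pos a b m (tt k)"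
proof -
  define t where "t = tt k"
  have t0: "t \<noteq> 0" by (simp add: t_def tt_nonzero)
  have t4: "t ^ (4 * k) = 1" by (simp add: t_def tt_pow[OF k])
  define g where "g j = TT a b t (2 * int j - 2 * int k + int m + 1)" for j :: nat
  have S1: "(\<Sum>j<2 * k - m. TT a b t (2 * int j - int (2 * k - m) + 1)) = (\<Sum>j<2 * k - m. g j)"
    using m by (simp add: g_def of_nat_diff algebra_simps)
  have S2: "(\<Sum>j<m. TT a b t (2 * int j - int m + 1)) = (\<Sum>j\<in>{2 * k - m..<2 * k}. g j)"
  proof -
    have "(\<Sum>j\<in>{2 * k - m..<2 * k}. g j) = (\<Sum>j\<in>{0 + (2 * k - m)..<m + (2 * k - m)}. g j)"
      using m by simp
    also have "\<dots> = sum (g \<circ> plus (2 * k - m)) {0..<m}"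
      by (rule sum.atLeastLessThan_shift_bounds)
    also have "\<dots> = (\<Sum>j\<in>{0..<m}. g (j + (2 * k - m)))"
      by (simp add: comp_def add.commute)
    also have "\<dots> = (\<Sum>j<m. TT a b t (2 * int j - int m + 1))"
    proof (rule sum.cong)
      fix j assume "j \<in> {..<m}"
      have eqj: "2 * int (j + (2 * k - m)) - 2 * int k + int m + 1 = (2 * int j - int m + 1) + 2 * int k"
        using m by (simp add: of_nat_diff algebra_simps)
      have "g (j + (2 * k - m)) = TT a b t ((2 * int j - int m + 1) + 2 * int k)"
        unfolding g_def eqj by (rule refl)
      also have "\<dots> = TT a b t (2 * int j - int m + 1)"
        unfolding t_def by (rule TT_per[OF k])
      finally show "g (j + (2 * k - m)) = TT a b t (2 * int j - int m + 1)" .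
    qed (simp add: lessThan_atLeast0)
    finally show ?thesis by simp
  qed
  have "(\<Sum>j<2 * k - m. g j) + (\<Sum>j\<in>{2 * k - m..<2 * k}. g j) = (\<Sum>j\<in>{0..<2 * k}. g j)"
    using m by (simp add: lessThan_atLeast0 sum.atLeastLessThan_concat)
  also have "\<dots> = sum ((\<lambda>i. TT a b t (2 * i + (int m + 1 - 2 * int k))) \<circ> int) {0..<2 * k}"
    by (rule sum.cong) (simp_all add: g_def algebra_simps)
  also have "\<dots> = (\<Sum>i\<in>{int 0..<int (2 * k)}. TT a b t (2 * i + (int m + 1 - 2 * int k)))"
    by (rule sum.atLeast_int_lessThan_int_shift[symmetric])
  also have "\<dots> = 0" using full_sum_zero[OF k t0 t4 cop, of "int m + 1 - 2 * int k"] by simp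
  finally have sum0: "(\<Sum>j<2 * k - m. TT a b t (2 * int j - int (2 * k - m) + 1))
       = - (\<Sum>j<m. TT a b t (2 * int j - int m + 1))"
    using S1 S2 by (simp add: eq_neg_iff_add_eq_0)
  have pre: "t powi (int (a*b) * (1 - (int (2 * k - m))\<^sup>2)) = t powi (int (a*b) * (1 - (int m)\<^sup>2))"
  proof (rule powi_cong[OF t0 t4])
    have "int (a*b) * (1 - (int (2 * k - m))\<^sup>2) - int (a*b) * (1 - (int m)\<^sup>2)
        = int (4 * k) * (int (a*b) * (int m - int k))"
      using m by (simp add: of_nat_diff power2_eq_square algebra_simps)
    then show "int (4 * k) dvd int (a*b) * (1 - (int (2 * k - m))\<^sup>2) - int (a*b) * (1 - (int m)\<^sup>2)"
      by (metis dvd_triv_left)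
  qed
  show ?thesis unfolding jones_pos_TT t_def[symmetric] using sum0 pre by simp
qed

lemma cramer:
  assumes "omg u v \<noteq> 0"
  shows "z = complex_of_real (omg z v / omg u v) * u + complex_of_real (omg u z / omg u v) * v"
proof -
  have "complex_of_real (omg u v) * z = complex_of_real (omg z v) * u + complex_of_real (omg u z) * v"
    by (simp add: complex_eq_iff omg_def algebra_simps)
  then show ?thesis using assms
    by (simp add: field_simps of_real_divide del: of_real_mult)
qed

lemma fund_dom_repr:
  assumes "omg u v \<noteq> 0"
  shows "fund_dom u v = {z. 0 \<le> omg z v / omg u v \<and> omg z v / omg u v < 1 \<and>
                           0 \<le> omg u z / omg u v \<and> omg u z / omg u v < 1}"
proof (intro set_eqI iffI)
  fix z assume "z \<in> fund_dom u v"
  then obtain s t where st: "z = complex_of_real s * u + complex_of_real t * v" "0 \<le> s" "s < 1" "0 \<le> t" "t < 1"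
    unfolding fund_dom_def by blast
  have "omg z v = s * omg u v" using st(1) by (simp add: omg_def algebra_simps)
  moreover have "omg u z = t * omg u v" using st(1) by (simp add: omg_def algebra_simps)
  ultimately show "z \<in> {z. 0 \<le> omg z v / omg u v \<and> omg z v / omg u v < 1 \<and>
                           0 \<le> omg u z / omg u v \<and> omg u z / omg u v < 1}"
    using st assms by simp
next
  fix z assume "z \<in> {z. 0 \<le> omg z v / omg u v \<and> omg z v / omg u v < 1 \<and>
                           0 \<le> omg u z / omg u v \<and> omg u z / omg u v < 1}"
  then show "z \<in> fund_dom u v" unfolding fund_dom_def using cramer[OF assms, of z] by blast
qed

lemma fund_dom_sets:
  assumes "omg u v \<noteq> 0"
  shows "fund_dom u v \<in> sets lborel"
proof -
  have m1: "(\<lambda>z. omg z v / omg u v) \<in> borel_measurable borel"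
    using assms unfolding omg_def by (intro borel_measurable_continuous_onI continuous_intros) auto
  have m2: "(\<lambda>z. omg u z / omg u v) \<in> borel_measurable borel"
    using assms unfolding omg_def by (intro borel_measurable_continuous_onI continuous_intros) auto
  have "{z. 0 \<le> omg z v / omg u v \<and> omg z v / omg u v < 1 \<and>
                           0 \<le> omg u z / omg u v \<and> omg u z / omg u v < 1} \<in> sets borel"
    using m1 m2 by measurable
  then show ?thesis using fund_dom_repr[OF assms] by simp
qed

lemma fund_dom_bounded: "fund_dom u v \<subseteq> cball 0 (norm u + norm v)"
proof
  fix z assume "z \<in> fund_dom u v"
  then obtain s t where st: "z = complex_of_real s * u + complex_of_real t * v" "0 \<le> s" "s < 1" "0 \<le> t" "t < 1"
    unfolding fund_dom_def by blast
  have "norm z \<le> norm (complex_of_real s * u) + norm (complex_of_real t * v)" using st(1) norm_triangle_ineq by blast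
  also have "\<dots> = \<bar>s\<bar> * norm u + \<bar>t\<bar> * norm v" by (simp add: norm_mult)
  also have "\<dots> \<le> norm u + norm v" using st by (intro add_mono mult_left_le_one_le) auto
  finally show "z \<in> cball 0 (norm u + norm v)" by simp
qed

lemma integrable_fd:
  fixes h :: "complex \<Rightarrow> complex"
  assumes "omg u v \<noteq> 0" "continuous_on UNIV h"
  shows "set_integrable lborel (fund_dom u v) h"
proof (rule set_integrable_subset[OF _ fund_dom_sets[OF assms(1)] fund_dom_bounded])
  show "set_integrable lborel (cball 0 (norm u + norm v)) h"
    unfolding set_integrable_def
    by (rule borel_integrable_compact) (use assms(2) continuous_on_subset in auto)
qed

lemma cont_delta: "continuous_on UNIV f \<Longrightarrow> continuous_on UNIV g \<Longrightarrow>
   continuous_on UNIV (\<lambda>z. delta_inner (f z) (g z))"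
  unfolding delta_inner_def by (intro continuous_intros) auto

lemma sec_inner_sum:
  assumes om: "omg u v \<noteq> 0" and fin: "finite A"
    and cf: "\<forall>i\<in>A. continuous_on UNIV (f i)" and cg: "continuous_on UNIV g"
  shows "sec_inner u v (\<lambda>z. \<Sum>i\<in>A. d i * f i z) g = (\<Sum>i\<in>A. d i * sec_inner u v (f i) g)
     \<and> set_integrable lborel (fund_dom u v) (\<lambda>z. delta_inner (\<Sum>i\<in>A. d i * f i z) (g z))"
  using fin cf
proof (induction A rule: finite_induct)
  case empty
  then show ?case by (simp add: sec_inner_def delta_inner_def set_integrable_def)
next
  case (insert x F)
  have ix: "set_integrable lborel (fund_dom u v) (\<lambda>z. delta_inner (f x z) (g z))"
    using insert.prems om cg by (intro integrable_fd cont_delta) auto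
  have split: "delta_inner (\<Sum>i\<in>insert x F. d i * f i z) (g z)
      = d x * delta_inner (f x z) (g z) + delta_inner (\<Sum>i\<in>F. d i * f i z) (g z)" for z
    using insert.hyps by (simp add: delta_inner_def algebra_simps)
  have IH: "sec_inner u v (\<lambda>z. \<Sum>i\<in>F. d i * f i z) g = (\<Sum>i\<in>F. d i * sec_inner u v (f i) g)"
     "set_integrable lborel (fund_dom u v) (\<lambda>z. delta_inner (\<Sum>i\<in>F. d i * f i z) (g z))"
    using insert by auto
  have ix': "set_integrable lborel (fund_dom u v) (\<lambda>z. d x * delta_inner (f x z) (g z))"
    using ix by auto
  show ?case
    unfolding split sec_inner_def
    using set_integral_add[OF ix' IH(2)] IH(1) insert.hyps
    by (simp add: sec_inner_def)
qed

lemma holo_par: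
  assumes "holo_sec k f"
  shows "holo_sec k (\<lambda>z. f (- z))"
proof -
  have dif: "f differentiable (at y)" for y using assms by (simp add: holo_sec_def)
  define Df where "Df y = frechet_derivative f (at y)" for y
  have hd: "(f has_derivative Df y) (at y)" for y
    using dif[of y] frechet_derivative_works[of f "at y"] unfolding Df_def by simp
  have hd2: "((\<lambda>z. f (- z)) has_derivative (\<lambda>w. Df (- y) (- w))) (at y)" for y
    using has_derivative_compose[OF has_derivative_minus[OF has_derivative_ident] hd[of "-y"]] by simp
  have fd: "frechet_derivative (\<lambda>z. f (- z)) (at y) = (\<lambda>w. Df (- y) (- w))" for y
    using frechet_derivative_at[OF hd2] by simp
  have lin: "Df y (- w) = - Df y w" for y w
    using has_derivative_bounded_linear[OF hd[of y]] by (simp add: bounded_linear.linear linear_neg)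
  have cd: "cov_der k (\<lambda>z. f (- z)) y w = - cov_der k f (- y) w" for y w
    by (simp add: cov_der_def fd lin Df_def[symmetric] omg_minus_left algebra_simps)
  show ?thesis unfolding holo_sec_def
  proof (intro conjI allI)
    fix y show "(\<lambda>z. f (- z)) differentiable at y" using hd2 by (auto intro: differentiableI)
  next
    fix y v
    have "cov_der k f (- y) (\<i> * v) = \<i> * cov_der k f (- y) v" using assms by (simp add: holo_sec_def)
    then show "cov_der k (\<lambda>z. f (- z)) y (\<i> * v) = \<i> * cov_der k (\<lambda>z. f (- z)) y v"
      by (simp add: cd)
  qed
qed

lemma lattice_neg: "x \<in> lattice u v \<Longrightarrow> - x \<in> lattice u v"
  unfolding lattice_def
  by clarsimp (metis (no_types, opaque_lifting) add_uminus_conv_diff minus_add_distrib mult_minus_left of_int_minus)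

lemma sec_space_par:
  assumes "f \<in> sec_space k u v"
  shows "(\<lambda>z. f (- z)) \<in> sec_space k u v"
proof -
  have "holo_sec k (\<lambda>z. f (- z))" using assms holo_par by (simp add: sec_space_def)
  moreover have "Tstar k x (\<lambda>z. f (- z)) = (\<lambda>z. f (- z))" if "x \<in> lattice u v" for x
  proof -
    have "Tstar k (- x) f = f" using assms lattice_neg[OF that] by (simp add: sec_space_def)
    then show ?thesis by (simp add: Tstar_par)
  qed
  ultimately show ?thesis by (simp add: sec_space_def)
qed

lemma lattice_sub: "lattice (of_nat D * mu) lam \<subseteq> lattice lam mu"
proof
  fix x assume "x \<in> lattice (of_nat D * mu) lam"
  then obtain m n where "x = of_int m * (of_nat D * mu) + of_int n * lam" unfolding lattice_def by blast
  then have "x = of_int n * lam + of_int (m * int D) * mu" by (simp add: algebra_simps)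
  then show "x \<in> lattice lam mu" unfolding lattice_def by blast
qed

lemma sec_space_sub: "sec_space k lam mu \<subseteq> sec_space k (of_nat D * mu) lam"
  using lattice_sub unfolding sec_space_def by blast

lemma sec_space_cont: "f \<in> sec_space k u v \<Longrightarrow> continuous_on UNIV f"
  unfolding sec_space_def holo_sec_def
  by (auto intro!: continuous_at_imp_continuous_on differentiable_imp_continuous_within)

definition rt :: "nat \<Rightarrow> int \<Rightarrow> complex" where
  "rt N i = exp (2 * \<i> * of_real pi * of_int i / of_nat N)"

lemma rt_eq_dvd:
  assumes "N > 0" "rt N a = rt N b"
  shows "int N dvd a - b"
proof -
  have conv: "2 * \<i> * of_real pi * of_int x / of_nat N = complex_of_real (2 * pi * x / N) * \<i>" for x :: int
    by simp
  obtain n :: int where n: "2 * \<i> * of_real pi * of_int a / of_nat N = 2 * \<i> * of_real pi * of_int b / of_nat N + (of_int (2 * n) * pi) * \<i>"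
    using assms(2) unfolding rt_def exp_eq by blast
  then have "complex_of_real (2 * pi * a / N) * \<i> = complex_of_real (2 * pi * b / N + 2 * n * pi) * \<i>"
    unfolding conv by (simp add: distrib_right)
  then have "complex_of_real (2 * pi * a / N) = complex_of_real (2 * pi * b / N + 2 * n * pi)"
    by (metis complex_i_not_zero mult_cancel_right)
  then have "2 * pi * a / N = 2 * pi * b / N + 2 * n * pi" by (simp only: of_real_eq_iff)
  then have "2 * pi * a = 2 * pi * b + 2 * n * pi * N" using assms(1) by (simp add: field_simps)
  then have "pi * (2 * real_of_int a) = pi * (2 * (b + n * N))" by (simp add: algebra_simps)
  then have "2 * real_of_int a = 2 * (b + n * N)" using pi_neq_zero by (metis mult_left_cancel)
  then have "real_of_int a = b + n * N" by simp
  then have "real_of_int a = real_of_int (b + n * int N)" by simp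
  then have "a = b + n * int N" by (simp only: of_int_eq_iff)
  then show ?thesis by simp
qed

lemma rt_nonzero: "rt N i \<noteq> 0" by (simp add: rt_def)

lemma rt_neg: "inverse (rt N i) = rt N (- i)"
  by (simp add: rt_def exp_minus[symmetric])

lemma rt_mod: assumes "N > 0" shows "rt N (i mod int N) = rt N i"
proof -
  have "(of_int i::complex) = of_int (i mod int N + int N * (i div int N))" by simp
  also have "\<dots> = of_int (i mod int N) + of_nat N * of_int (i div int N)"
    by (simp only: of_int_add of_int_mult of_int_of_nat_eq)
  finally have ii: "(of_int i::complex) = of_int (i mod int N) + of_nat N * of_int (i div int N)" .
  have "2 * \<i> * of_real pi * of_int i / of_nat N
      = 2 * \<i> * of_real pi * of_int (i mod int N) / of_nat N + \<i> * (of_int (i div int N) * (of_real pi * 2))"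
    unfolding ii using assms by (simp add: field_simps)
  then show ?thesis by (simp add: rt_def)
qed

lemma onb_coeff:
  assumes onb: "onb_family V (sec_inner u v) N e" and om: "omg u v \<noteq> 0"
    and Vc: "\<forall>f\<in>V. continuous_on UNIV f" and j: "j \<in> {0..<int N}"
  shows "sec_inner u v (\<lambda>z. \<Sum>i\<in>{0..<int N}. d i * e i z) (e j) = d j"
proof -
  have ein: "\<forall>i. e i \<in> V" using onb by (simp add: onb_family_def)
  have "sec_inner u v (\<lambda>z. \<Sum>i\<in>{0..<int N}. d i * e i z) (e j) = (\<Sum>i\<in>{0..<int N}. d i * sec_inner u v (e i) (e j))"
    using sec_inner_sum[OF om, of "{0..<int N}" e "e j" d] ein Vc by auto
  also have "\<dots> = (\<Sum>i\<in>{0..<int N}. d i * (if i = j then 1 else 0))"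
    using onb j by (intro sum.cong) (auto simp: onb_family_def)
  also have "\<dots> = d j" using j by (simp add: if_distrib cong: if_cong)
  finally show ?thesis .
qed

lemma onb_unique:
  assumes onb: "onb_family V (sec_inner u v) N e" and om: "omg u v \<noteq> 0"
    and Vc: "\<forall>f\<in>V. continuous_on UNIV f"
    and eq: "(\<lambda>z. \<Sum>i\<in>{0..<int N}. d i * e i z) = (\<lambda>z. \<Sum>i\<in>{0..<int N}. d' i * e i z)"
    and j: "j \<in> {0..<int N}"
  shows "d j = d' j"
proof -
  have "d j = sec_inner u v (\<lambda>z. \<Sum>i\<in>{0..<int N}. d i * e i z) (e j)"
    by (rule onb_coeff[OF onb om Vc j, symmetric])
  also have "\<dots> = sec_inner u v (\<lambda>z. \<Sum>i\<in>{0..<int N}. d' i * e i z) (e j)"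
    by (simp only: eq)
  also have "\<dots> = d' j" by (rule onb_coeff[OF onb om Vc j])
  finally show ?thesis .
qed

lemma onb_nonzero:
  assumes onb: "onb_family V (sec_inner u v) N e" and N: "N > 0"
  shows "e j \<noteq> (\<lambda>z. 0)"
proof
  assume e0: "e j = (\<lambda>z. 0)"
  have per: "\<forall>i. e (i + int N) = e i" using onb by (simp add: onb_family_def)
  have em: "e (j mod int N) = e j" by (rule periodic_mod[OF per])
  have "j mod int N \<in> {0..<int N}" using N by simp
  moreover have "\<forall>i\<in>{0..<int N}. \<forall>j\<in>{0..<int N}. sec_inner u v (e i) (e j) = (if i = j then 1 else 0)"
    using onb unfolding onb_family_def by blast
  ultimately have "sec_inner u v (e (j mod int N)) (e (j mod int N)) = 1" by simp
  then have "sec_inner u v (\<lambda>z. 0) (\<lambda>z. 0) = 1" unfolding em e0 .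
  then show False by (simp add: sec_inner_def delta_inner_def)
qed

lemma scal_cancel:
  fixes f :: "complex \<Rightarrow> complex" and c c' :: complex
  assumes "(\<lambda>z. c * f z) = (\<lambda>z. c' * f z)" "f \<noteq> (\<lambda>z. 0)"
  shows "c = c'"
proof -
  obtain z where fz: "f z \<noteq> 0" using assms(2) by auto
  have "c * f z = c' * f z" using assms(1) by metis
  then show ?thesis by (rule mult_right_cancel[OF fz, THEN iffD1])
qed

lemma parity_basis:
  assumes onb: "onb_family V (sec_inner u v) N e" and om: "omg u v \<noteq> 0"
    and Vc: "\<forall>f\<in>V. continuous_on UNIV f" and N: "N > 0"
    and Vpar: "\<forall>f\<in>V. (\<lambda>z. f (- z)) \<in> V"
    and eigA: "\<forall>i. Tstar k x (e i) = (\<lambda>z. rt N i * e i z)"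
    and shiftB: "\<forall>i. Tstar k y (e i) = e (i - 1)"
    and nz: "e 0 0 \<noteq> 0"
  shows "(\<lambda>z. e i (- z)) = e (- i)"
proof -
  have per: "\<forall>i. e (i + int N) = e i" and ein: "\<forall>i. e i \<in> V"
    and span: "\<forall>\<Psi>\<in>V. \<exists>c. \<Psi> = (\<lambda>z. \<Sum>i\<in>{0..<int N}. c i * e i z)"
    using onb by (auto simp: onb_family_def)
  have enz: "e j \<noteq> (\<lambda>z. 0)" for j by (rule onb_nonzero[OF onb N])
  have step1: "\<exists>c. (\<lambda>z. e i (- z)) = (\<lambda>z. c * e (- i) z)" for i
  proof -
    obtain d where d: "(\<lambda>z. e i (- z)) = (\<lambda>z. \<Sum>j\<in>{0..<int N}. d j * e j z)"
      using span Vpar ein by blast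
    have A: "Tstar k (- x) (e i) = (\<lambda>z. rt N (- i) * e i z)"
      using Tstar_eigen_inv[of k x "e i" "rt N i"] eigA rt_nonzero rt_neg by simp
    have B: "Tstar k x (\<lambda>z. e i (- z)) = (\<lambda>z. rt N (- i) * e i (- z))"
      by (simp add: Tstar_par A)
    have L: "Tstar k x (\<lambda>z. e i (- z)) = (\<lambda>z. \<Sum>j\<in>{0..<int N}. (d j * rt N j) * e j z)"
      unfolding d Tstar_sum using eigA by (simp add: mult.assoc)
    have R: "(\<lambda>z. rt N (- i) * e i (- z)) = (\<lambda>z. \<Sum>j\<in>{0..<int N}. (rt N (- i) * d j) * e j z)"
      using d by (simp add: sum_distrib_left mult.assoc fun_eq_iff)
    have eq: "(\<lambda>z. \<Sum>j\<in>{0..<int N}. (d j * rt N j) * e j z) = (\<lambda>z. \<Sum>j\<in>{0..<int N}. (rt N (- i) * d j) * e j z)"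
    proof -
      have "(\<lambda>z. \<Sum>j\<in>{0..<int N}. (d j * rt N j) * e j z) = Tstar k x (\<lambda>z. e i (- z))" by (rule L[symmetric])
      also have "\<dots> = (\<lambda>z. rt N (- i) * e i (- z))" by (rule B)
      also have "\<dots> = (\<lambda>z. \<Sum>j\<in>{0..<int N}. (rt N (- i) * d j) * e j z)" by (rule R)
      finally show ?thesis .
    qed
    have coef: "d j * rt N j = rt N (- i) * d j" if "j \<in> {0..<int N}" for j
      by (rule onb_unique[OF onb om Vc eq that])
    define j0 where "j0 = (- i) mod int N"
    have j0r: "j0 \<in> {0..<int N}" using N by (simp add: j0_def)
    have dz: "d j = 0" if "j \<in> {0..<int N}" "j \<noteq> j0" for j
    proof (rule ccontr)
      assume "d j \<noteq> 0"
      then have "rt N j = rt N (- i)" using coef[OF that(1)] by (simp add: mult.commute)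
      then have "int N dvd j - (- i)" by (rule rt_eq_dvd[OF N])
      then have "j mod int N = (- i) mod int N" by (simp add: mod_eq_dvd_iff)
      then show False using that by (simp add: j0_def)
    qed
    have "(\<lambda>z. \<Sum>j\<in>{0..<int N}. d j * e j z) = (\<lambda>z. \<Sum>j\<in>{0..<int N}. if j = j0 then d j0 * e j0 z else 0)"
      using dz by (intro ext sum.cong) auto
    also have "\<dots> = (\<lambda>z. d j0 * e j0 z)" using j0r by simp
    also have "e j0 = e (- i)" unfolding j0_def by (rule periodic_mod[OF per])
    finally show ?thesis using d by auto
  qed
  define c where "c i = (SOME c. (\<lambda>z. e i (- z)) = (\<lambda>z. c * e (- i) z))" for i
  have c: "(\<lambda>z. e i (- z)) = (\<lambda>z. c i * e (- i) z)" for i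
    unfolding c_def by (rule someI_ex[OF step1])
  have shiftc: "c (i + 1) = c i" for i
  proof -
    have "Tstar k y (e (i + 1)) = e i" using shiftB by simp
    then have sB: "Tstar k (- y) (e i) = e (i + 1)"
      using Tstar_inv'[of k y "e (i + 1)"] by simp
    have "Tstar k y (\<lambda>z. e i (- z)) = (\<lambda>z. e (i + 1) (- z))" by (simp add: Tstar_par sB)
    also have "\<dots> = (\<lambda>z. c (i + 1) * e (- (i + 1)) z)" by (rule c)
    also have "- (i + 1) = - i - 1" by simp
    finally have 1: "Tstar k y (\<lambda>z. e i (- z)) = (\<lambda>z. c (i + 1) * e (- i - 1) z)" .
    have "Tstar k y (\<lambda>z. e i (- z)) = Tstar k y (\<lambda>z. c i * e (- i) z)" using c[of i] by simp
    also have "\<dots> = (\<lambda>z. c i * e (- i - 1) z)" using shiftB by (simp add: Tstar_scale)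
    finally have 2: "Tstar k y (\<lambda>z. e i (- z)) = (\<lambda>z. c i * e (- i - 1) z)" .
    show ?thesis by (rule scal_cancel[OF trans[OF 1[symmetric] 2] enz])
  qed
  have step3: "c i = c 0" for i
  proof (induction i rule: int_induct[where k=0])
    case base then show ?case by simp
  next
    case (step1 i) then show ?case using shiftc[of i] by simp
  next
    case (step2 i) then show ?case using shiftc[of "i - 1"] by simp
  qed
  have "e 0 0 = c 0 * e 0 0" using fun_cong[OF c[of 0], of 0] by simp
  then have c0: "c 0 = 1" using nz by simp
  show ?thesis using c[of i] step3[of i] c0 by simp
qed

lemma omg_antisym: "omg x y = - omg y x"
  by (simp add: omg_def algebra_simps)

lemma omg_of_nat_left: "omg (of_nat D * x) y = real D * omg x y"
  by (simp add: omg_def algebra_simps)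

lemma xi_parity:
  assumes k: "k > 0" and xb: "xi_basis lam mu Om k \<xi>" and om: "omg mu lam = 4 * pi" and Om: "Om \<noteq> 0"
  shows "(\<lambda>z. \<xi> l (- z)) = \<xi> (- l)"
proof -
  have onb: "onb_family (sec_space k lam mu) (sec_inner lam mu) (2 * k) \<xi>" using xb by (simp add: xi_basis_def)
  have om': "omg lam mu \<noteq> 0" using om by (simp add: omg_antisym[of lam mu])
  have eig: "\<forall>i. Tstar k (mu / of_nat (2 * k)) (\<xi> i) = (\<lambda>z. rt (2 * k) i * \<xi> i z)"
  proof
    fix i
    have "rt (2 * k) i = exp (\<i> * of_real pi * of_int i / of_nat k)"
      unfolding rt_def by (simp add: field_simps)
    then show "Tstar k (mu / of_nat (2 * k)) (\<xi> i) = (\<lambda>z. rt (2 * k) i * \<xi> i z)"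
      using xb by (simp add: xi_basis_def)
  qed
  have sh: "\<forall>i. Tstar k (- lam / of_nat (2 * k)) (\<xi> i) = \<xi> (i - 1)" using xb by (simp add: xi_basis_def)
  obtain r where r: "r > 0" "\<xi> 0 0 = complex_of_real r * Om" using xb by (auto simp: xi_basis_def)
  have nz: "\<xi> 0 0 \<noteq> 0" using r Om by simp
  show ?thesis
    by (rule parity_basis[OF onb om' _ _ _ eig sh nz])
       (use k sec_space_cont sec_space_par in auto)
qed

lemma psi_parity:
  assumes k: "k > 0" and D: "D > 0" and pb: "psi_basis D lam mu k \<Psi>" and om: "omg mu lam = 4 * pi"
    and nz: "\<Psi> 0 0 \<noteq> 0"
  shows "(\<lambda>z. \<Psi> n (- z)) = \<Psi> (- n)"
proof -
  have onb: "onb_family (sec_space k (of_nat D * mu) lam) (sec_inner (of_nat D * mu) lam) (2 * k * D) \<Psi>"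
    using pb by (simp add: psi_basis_def)
  have om': "omg (of_nat D * mu) lam \<noteq> 0" using om D by (simp add: omg_of_nat_left)
  have eig: "\<forall>i. Tstar k (- lam / of_nat (2 * k * D)) (\<Psi> i) = (\<lambda>z. rt (2 * k * D) i * \<Psi> i z)"
  proof
    fix i
    have "rt (2 * k * D) i = exp (\<i> * of_real pi * of_int i / of_nat (k * D))"
      unfolding rt_def by (simp add: field_simps)
    then show "Tstar k (- lam / of_nat (2 * k * D)) (\<Psi> i) = (\<lambda>z. rt (2 * k * D) i * \<Psi> i z)"
      using pb by (simp add: psi_basis_def)
  qed
  define R where "R = (of_nat D * mu - 2 * lam) / of_nat (2 * k * D)"
  have sh: "\<forall>i. Tstar k (- R) (\<Psi> i) = \<Psi> (i - 1)"
  proof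
    fix i
    have "Tstar k R (\<Psi> (i - 1)) = \<Psi> i" using pb by (simp add: psi_basis_def R_def)
    then show "Tstar k (- R) (\<Psi> i) = \<Psi> (i - 1)" using Tstar_inv'[of k R "\<Psi> (i - 1)"] by simp
  qed
  show ?thesis
    by (rule parity_basis[OF onb om' _ _ _ eig sh nz])
       (use k D sec_space_cont sec_space_par in auto)
qed

lemma sum_reflect:
  fixes g :: "int \<Rightarrow> 'a::comm_monoid_add"
  assumes N: "N > 0"
  shows "(\<Sum>l\<in>{0..<int N}. g l) = (\<Sum>l\<in>{0..<int N}. g ((- l) mod int N))"
proof -
  define f where "f l = g (l mod int N)" for l
  have per: "\<forall>i. f (i + int N) = f i" by (simp add: f_def)
  have cop: "coprime (-1::int) (int N)" by simp
  have "(\<Sum>l\<in>{0..<int N}. f ((-1) * l + 0)) = (\<Sum>l\<in>{0..<int N}. f l)"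
    by (rule sum_reindex_unit[OF _ per cop]) (use N in simp)
  moreover have "(\<Sum>l\<in>{0..<int N}. f l) = (\<Sum>l\<in>{0..<int N}. g l)"
    by (intro sum.cong) (auto simp: f_def)
  ultimately show ?thesis by (simp add: f_def)
qed

lemma jones_refl:
  assumes k: "k > 0" and cop: "coprime a b" and l: "l \<in> {0..<2 * int k}"
  shows "jones a b ((- l) mod (2 * int k)) (tt k) = - jones a b l (tt k)"
proof (cases "l = 0")
  case True then show ?thesis by (simp add: jones_def)
next
  case False
  then have l0: "0 < l" "l < 2 * int k" using l by auto
  have "(- l) mod (2 * int k) = (2 * int k - l) mod (2 * int k)"
    by (simp add: mod_eq_dvd_iff)
  also have "\<dots> = 2 * int k - l" by (rule mod_pos_pos_trivial) (use l0 in auto)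
  finally have m: "(- l) mod (2 * int k) = 2 * int k - l" .
  have n1: "nat (2 * int k - l) = 2 * k - nat l" using l0 by simp
  have "jones a b (2 * int k - l) (tt k) = jones_pos a b (2 * k - nat l) (tt k)"
    using l0 by (simp add: jones_def n1)
  also have "\<dots> = - jones_pos a b (nat l) (tt k)"
    by (rule jones_anti[OF k _ _ cop]) (use l0 in auto)
  also have "\<dots> = - jones a b l (tt k)" using l0 by (simp add: jones_def)
  finally show ?thesis using m by simp
qed

lemma knot_odd:
  assumes k: "k > 0" and cop: "coprime a b"
    and par: "\<forall>l. (\<lambda>z. \<xi> l (- z)) = \<xi> (- l)" and per: "\<forall>l. \<xi> (l + int (2 * k)) = \<xi> l"
  shows "knot_state a b k \<xi> (- z) = - knot_state a b k \<xi> z"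
proof -
  define J where "J l = jones a b l (tt k)" for l
  have t: "- exp (\<i> * of_real pi / of_nat (2 * k)) = tt k" by (simp add: tt_def)
  have kk: "int (2 * k) = 2 * int k" by simp
  have "(\<Sum>l\<in>{0..<2 * int k}. J l * \<xi> l (- z)) = (\<Sum>l\<in>{0..<int (2 * k)}. J l * \<xi> (- l) z)"
    using par by (simp add: fun_eq_iff)
  also have "\<dots> = (\<Sum>l\<in>{0..<int (2 * k)}. J ((- l) mod int (2 * k)) * \<xi> (- ((- l) mod int (2 * k))) z)"
    by (rule sum_reflect) (use k in simp)
  also have "\<dots> = (\<Sum>l\<in>{0..<2 * int k}. - J l * \<xi> l z)"
  proof (rule sum.cong)
    fix l assume l: "l \<in> {0..<2 * int k}"
    have "\<xi> (- ((- l) mod int (2 * k))) = \<xi> ((- ((- l) mod int (2 * k))) mod int (2 * k))"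
      by (rule periodic_mod[OF per, symmetric])
    also have "(- ((- l) mod int (2 * k))) mod int (2 * k) = l"
      using l by (simp add: mod_minus_eq)
    finally have x: "\<xi> (- ((- l) mod int (2 * k))) = \<xi> l" .
    show "J ((- l) mod int (2 * k)) * \<xi> (- ((- l) mod int (2 * k))) z = - J l * \<xi> l z"
      using x jones_refl[OF k cop l] unfolding kk J_def by simp
  qed (simp add: kk)
  finally have s: "(\<Sum>l\<in>{0..<2 * int k}. J l * \<xi> l (- z)) = - (\<Sum>l\<in>{0..<2 * int k}. J l * \<xi> l z)"
    by (simp add: sum_negf)
  show ?thesis unfolding knot_state_def t J_def[symmetric] s by simp
qed

lemma rt_cong: assumes "D > 0" "int D dvd x - y" shows "rt D x = rt D y"
proof -
  have "x mod int D = y mod int D" using assms(2) by (simp add: mod_eq_dvd_iff)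
  then show ?thesis using rt_mod[OF assms(1), of x] rt_mod[OF assms(1), of y] by simp
qed

lemma rt_add: "rt D x * rt D y = rt D (x + y)"
  by (simp add: rt_def exp_add[symmetric] add_divide_distrib distrib_left)

lemma rt_zero: "rt D 0 = 1" by (simp add: rt_def)

lemma rt_pow: "rt D (int m * j) = rt D j ^ m"
proof -
  have "rt D j ^ m = exp (of_nat m * (2 * \<i> * of_real pi * of_int j / of_nat D))"
    unfolding rt_def by (rule exp_of_nat_mult[symmetric])
  also have "of_nat m * (2 * \<i> * of_real pi * of_int j / of_nat D) = 2 * \<i> * of_real pi * of_int (int m * j) / of_nat D"
    by simp
  finally show ?thesis by (simp add: rt_def)
qed

lemma rt_geom:
  assumes D: "D > 0"
  shows "(\<Sum>m\<in>{0..<int D}. rt D (m * j)) = (if int D dvd j then of_nat D else 0)"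
proof -
  have "(\<Sum>m\<in>{0..<int D}. rt D (m * j)) = (\<Sum>m\<in>{int 0..<int D}. rt D (m * j))" by simp
  also have "\<dots> = sum ((\<lambda>m. rt D (m * j)) \<circ> int) {0..<D}"
    by (rule sum.atLeast_int_lessThan_int_shift)
  also have "\<dots> = (\<Sum>m<D. rt D j ^ m)"
    by (simp add: rt_pow lessThan_atLeast0)
  finally have s: "(\<Sum>m\<in>{0..<int D}. rt D (m * j)) = (\<Sum>m<D. rt D j ^ m)" .
  show ?thesis
  proof (cases "int D dvd j")
    case True
    then have "rt D j = rt D 0" by (intro rt_cong[OF D]) simp
    then show ?thesis using s True by (simp add: rt_zero)
  next
    case False
    have ne: "rt D j \<noteq> 1"
    proof
      assume "rt D j = 1"
      then have "rt D j = rt D 0" by (simp add: rt_zero)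
      then have "int D dvd j - 0" by (rule rt_eq_dvd[OF D])
      then show False using False by simp
    qed
    have "rt D j ^ D = rt D (int D * j)" by (simp add: rt_pow)
    also have "\<dots> = rt D 0" by (intro rt_cong[OF D]) simp
    finally have p: "rt D j ^ D = 1" by (simp add: rt_zero)
    show ?thesis using s False ne p by (simp add: sum_gp_strict)
  qed
qed

lemma dft_helper:
  fixes g :: "int \<Rightarrow> complex"
  assumes D: "D > 0"
  shows "(\<Sum>m\<in>{0..<int D}. (\<Sum>l\<in>{0..<int D}. g l * rt D (m * l * s)) * rt D (- (m * l0)))
       = (\<Sum>l\<in>{0..<int D}. g l * (if int D dvd (l * s - l0) then of_nat D else 0))"
proof -
  have "(\<Sum>m\<in>{0..<int D}. (\<Sum>l\<in>{0..<int D}. g l * rt D (m * l * s)) * rt D (- (m * l0)))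
      = (\<Sum>m\<in>{0..<int D}. \<Sum>l\<in>{0..<int D}. g l * rt D (m * (l * s - l0)))"
  proof (rule sum.cong[OF refl])
    fix m
    have "(\<Sum>l\<in>{0..<int D}. g l * rt D (m * l * s)) * rt D (- (m * l0))
        = (\<Sum>l\<in>{0..<int D}. g l * (rt D (m * l * s) * rt D (- (m * l0))))"
      by (simp add: sum_distrib_right mult.assoc)
    also have "\<dots> = (\<Sum>l\<in>{0..<int D}. g l * rt D (m * (l * s - l0)))"
      by (simp add: rt_add algebra_simps)
    finally show "(\<Sum>l\<in>{0..<int D}. g l * rt D (m * l * s)) * rt D (- (m * l0))
        = (\<Sum>l\<in>{0..<int D}. g l * rt D (m * (l * s - l0)))" .
  qed
  also have "\<dots> = (\<Sum>l\<in>{0..<int D}. \<Sum>m\<in>{0..<int D}. g l * rt D (m * (l * s - l0)))"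
    by (rule sum.swap)
  also have "\<dots> = (\<Sum>l\<in>{0..<int D}. g l * (\<Sum>m\<in>{0..<int D}. rt D (m * (l * s - l0))))"
    by (simp add: sum_distrib_left)
  also have "\<dots> = (\<Sum>l\<in>{0..<int D}. g l * (if int D dvd (l * s - l0) then of_nat D else 0))"
    by (simp add: rt_geom[OF D])
  finally show ?thesis .
qed

lemma dft_pos:
  fixes g :: "int \<Rightarrow> complex"
  assumes D: "D > 0" and l0: "l0 \<in> {0..<int D}"
  shows "(\<Sum>m\<in>{0..<int D}. (\<Sum>l\<in>{0..<int D}. g l * rt D (m * l)) * rt D (- (m * l0))) = of_nat D * g l0"
proof -
  have "(\<Sum>m\<in>{0..<int D}. (\<Sum>l\<in>{0..<int D}. g l * rt D (m * l)) * rt D (- (m * l0)))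
      = (\<Sum>l\<in>{0..<int D}. g l * (if int D dvd (l * 1 - l0) then of_nat D else 0))"
    using dft_helper[OF D, of g 1 l0] by simp
  also have "\<dots> = (\<Sum>l\<in>{0..<int D}. if l = l0 then g l0 * of_nat D else 0)"
  proof (rule sum.cong[OF refl])
    fix l assume l: "l \<in> {0..<int D}"
    have "int D dvd (l - l0) \<longleftrightarrow> l = l0"
    proof
      assume "int D dvd (l - l0)"
      then have "l mod int D = l0 mod int D" by (simp add: mod_eq_dvd_iff)
      then show "l = l0" using l l0 by simp
    qed simp
    then show "g l * (if int D dvd (l * 1 - l0) then of_nat D else 0) = (if l = l0 then g l0 * of_nat D else 0)"
      by auto
  qed
  also have "\<dots> = of_nat D * g l0" using l0 by simp
  finally show ?thesis .
qed

lemma dft_neg: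
  fixes g :: "int \<Rightarrow> complex"
  assumes D: "D > 0" and l0: "l0 \<in> {0..<int D}"
  shows "(\<Sum>m\<in>{0..<int D}. (\<Sum>l\<in>{0..<int D}. g l * rt D (- (m * l))) * rt D (- (m * l0))) = of_nat D * g ((- l0) mod int D)"
proof -
  have "(\<Sum>m\<in>{0..<int D}. (\<Sum>l\<in>{0..<int D}. g l * rt D (- (m * l))) * rt D (- (m * l0)))
      = (\<Sum>l\<in>{0..<int D}. g l * (if int D dvd (l * (-1) - l0) then of_nat D else 0))"
    using dft_helper[OF D, of g "-1" l0] by simp
  also have "\<dots> = (\<Sum>l\<in>{0..<int D}. if l = (- l0) mod int D then g ((- l0) mod int D) * of_nat D else 0)"
  proof (rule sum.cong[OF refl])
    fix l assume l: "l \<in> {0..<int D}"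
    have "int D dvd (l * (-1) - l0) \<longleftrightarrow> l = (- l0) mod int D"
    proof
      assume "int D dvd (l * (-1) - l0)"
      then have "int D dvd (l - (- l0))" by (metis dvd_minus_iff minus_diff_eq mult_minus1_right diff_minus_eq_add add.commute uminus_add_conv_diff)
      then have "l mod int D = (- l0) mod int D" by (simp add: mod_eq_dvd_iff)
      then show "l = (- l0) mod int D" using l by simp
    next
      assume "l = (- l0) mod int D"
      then have "l mod int D = (- l0) mod int D" by simp
      then have "int D dvd (l - (- l0))" by (simp add: mod_eq_dvd_iff)
      then show "int D dvd (l * (-1) - l0)" by (metis dvd_minus_iff minus_diff_eq mult_minus1_right diff_minus_eq_add add.commute uminus_add_conv_diff)
    qed
    then show "g l * (if int D dvd (l * (-1) - l0) then of_nat D else 0) = (if l = (- l0) mod int D then g ((- l0) mod int D) * of_nat D else 0)"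
      by auto
  qed
  also have "\<dots> = of_nat D * g ((- l0) mod int D)" using D by simp
  finally show ?thesis .
qed

lemma phi_rt: "exp (2 * \<i> * of_real pi * of_int n * of_int l / of_nat D) = rt D (n * l)"
  by (simp add: rt_def mult.assoc)

lemma Phi_expand:
  "(\<lambda>z. \<Sum>l\<in>{0..<int D}. g l * Phi D k \<Psi> l z)
   = (\<lambda>z. \<Sum>n\<in>{0..<int (2 * k * D)}. (1 / complex_of_real (sqrt (real (2 * k * D))) *
          (\<Sum>l\<in>{0..<int D}. g l * rt D (n * l))) * \<Psi> n z)"
proof
  fix z
  define s where "s = 1 / complex_of_real (sqrt (real (2 * k * D)))"
  have "(\<Sum>l\<in>{0..<int D}. g l * Phi D k \<Psi> l z)
      = (\<Sum>l\<in>{0..<int D}. \<Sum>n\<in>{0..<int (2 * k * D)}. g l * (s * (rt D (n * l) * \<Psi> n z)))"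
    unfolding Phi_def phi_rt s_def by (simp add: sum_distrib_left)
  also have "\<dots> = (\<Sum>n\<in>{0..<int (2 * k * D)}. \<Sum>l\<in>{0..<int D}. g l * (s * (rt D (n * l) * \<Psi> n z)))"
    by (rule sum.swap)
  also have "\<dots> = (\<Sum>n\<in>{0..<int (2 * k * D)}. (s * (\<Sum>l\<in>{0..<int D}. g l * rt D (n * l))) * \<Psi> n z)"
    by (simp add: sum_distrib_left sum_distrib_right mult_ac)
  finally show "(\<Sum>l\<in>{0..<int D}. g l * Phi D k \<Psi> l z)
      = (\<Sum>n\<in>{0..<int (2 * k * D)}. (1 / complex_of_real (sqrt (real (2 * k * D))) *
          (\<Sum>l\<in>{0..<int D}. g l * rt D (n * l))) * \<Psi> n z)" by (simp add: s_def)
qed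

lemma main_k:
  fixes a b k :: nat and lam mu Om_mu :: complex and \<xi> \<Psi> :: "int \<Rightarrow> complex \<Rightarrow> complex"
    and gp gm :: "int \<Rightarrow> complex"
  assumes a: "0 < a" "0 < b" and cop: "coprime a b" and om: "omg mu lam = 4 * pi"
    and Om: "Om_mu \<noteq> 0"
    and xb: "xi_basis lam mu Om_mu k \<xi>" and pb: "psi_basis (2 * a * b) lam mu k \<Psi>"
    and nz: "\<Psi> 0 0 \<noteq> 0" and kb: "k \<ge> 2 * a * b + a + b + 1"
    and gpc: "gamma_cond (2 * a * b) lam mu k (knot_state a b k \<xi>) \<Psi>
              (- int (a * b) + int a + int b) (2 * int k - int (a * b) - int a - int b) gp"
    and gmc: "gamma_cond (2 * a * b) lam mu k (knot_state a b k \<xi>) \<Psi>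
              (- 2 * int k - int (a * b) + int a + int b) (- int (a * b) - int a - int b) gm"
  shows "\<forall>l\<in>{0..<int (2 * a * b)}. gm ((- l) mod int (2 * a * b)) = - gp l"
proof -
  define D where "D = 2 * a * b"
  define N where "N = 2 * k * D"
  define U where "U = of_nat D * mu"
  define S where "S = {0..<int N}"
  have D0: "D > 0" using a by (simp add: D_def)
  have k0: "k > 0" using kb by simp
  have N0: "N > 0" using D0 k0 by (simp add: N_def)
  have onbX: "onb_family (sec_space k lam mu) (sec_inner lam mu) (2 * k) \<xi>" using xb by (simp add: xi_basis_def)
  have onbP: "onb_family (sec_space k U lam) (sec_inner U lam) N \<Psi>"
    using pb by (simp add: psi_basis_def U_def N_def D_def)
  have omU: "omg U lam \<noteq> 0" using om D0 by (simp add: U_def omg_of_nat_left)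
  have VcP: "\<forall>f\<in>sec_space k U lam. continuous_on UNIV f" using sec_space_cont by blast
  have parX: "\<forall>l. (\<lambda>z. \<xi> l (- z)) = \<xi> (- l)" using xi_parity[OF k0 xb om Om] by blast
  have parP: "(\<lambda>z. \<Psi> n (- z)) = \<Psi> (- n)" for n
    using psi_parity[OF k0 _ pb om nz] a by simp
  have perX: "\<forall>l. \<xi> (l + int (2 * k)) = \<xi> l" using onbX by (simp add: onb_family_def)
  have perP: "\<forall>n. \<Psi> (n + int N) = \<Psi> n" using onbP by (simp add: onb_family_def)
  have spanP: "\<forall>f\<in>sec_space k U lam. \<exists>c. f = (\<lambda>z. \<Sum>i\<in>S. c i * \<Psi> i z)"
    using onbP by (simp add: onb_family_def S_def)
  define Z where "Z = knot_state a b k \<xi>"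
  have oddZ: "Z (- z) = - Z z" for z
    unfolding Z_def by (rule knot_odd[OF k0 cop parX perX])
  have xiin: "\<xi> l \<in> sec_space k U lam" for l
    using onbX sec_space_sub[of k lam mu D] by (auto simp: onb_family_def U_def)
  define ec where "ec l = (SOME e. \<xi> l = (\<lambda>z. \<Sum>i\<in>S. e i * \<Psi> i z))" for l
  have ec: "\<xi> l = (\<lambda>z. \<Sum>i\<in>S. ec l i * \<Psi> i z)" for l
  proof -
    have ex: "\<exists>e. \<xi> l = (\<lambda>z. \<Sum>i\<in>S. e i * \<Psi> i z)" using spanP xiin by blast
    show ?thesis unfolding ec_def by (rule someI_ex[OF ex])
  qed
  define sc where "sc = complex_of_real (sin (pi / real k) / sqrt (real k))"
  define J where "J l = jones a b l (- exp (\<i> * of_real pi / of_nat (2 * k)))" for l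
  define c where "c n = sc * (\<Sum>l\<in>{0..<2 * int k}. J l * ec l n)" for n
  have ZE: "Z = (\<lambda>z. \<Sum>n\<in>S. c n * \<Psi> n z)"
  proof
    fix z
    have "Z z = sc * (\<Sum>l\<in>{0..<2 * int k}. J l * (\<Sum>i\<in>S. ec l i * \<Psi> i z))"
      unfolding Z_def knot_state_def sc_def[symmetric] J_def[symmetric]
      by (subst ec) (rule refl)
    also have "\<dots> = (\<Sum>l\<in>{0..<2 * int k}. \<Sum>i\<in>S. sc * J l * ec l i * \<Psi> i z)"
      by (simp add: sum_distrib_left mult_ac)
    also have "\<dots> = (\<Sum>i\<in>S. \<Sum>l\<in>{0..<2 * int k}. sc * J l * ec l i * \<Psi> i z)"
      by (rule sum.swap)
    also have "\<dots> = (\<Sum>n\<in>S. c n * \<Psi> n z)"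
      by (simp add: c_def sum_distrib_left sum_distrib_right mult_ac)
    finally show "Z z = (\<Sum>n\<in>S. c n * \<Psi> n z)" .
  qed
  have Pmod: "\<Psi> (n mod int N) = \<Psi> n" for n by (rule periodic_mod[OF perP])
  have SN: "S = {0..<int N}" by (simp add: S_def)
  have csym: "c ((- n) mod int N) = - c n" if n: "n \<in> S" for n
  proof -
    have E1: "(\<lambda>z. \<Sum>n\<in>{0..<int N}. c ((- n) mod int N) * \<Psi> n z) = (\<lambda>z. \<Sum>n\<in>{0..<int N}. (- c n) * \<Psi> n z)"
    proof
      fix z
      define g where "g n = c n * \<Psi> (- n) z" for n
      have "(\<Sum>n\<in>{0..<int N}. c ((- n) mod int N) * \<Psi> n z) = (\<Sum>n\<in>{0..<int N}. g ((- n) mod int N))"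
      proof (rule sum.cong[OF refl])
        fix n assume n: "n \<in> {0..<int N}"
        have "\<Psi> (- ((- n) mod int N)) = \<Psi> ((- ((- n) mod int N)) mod int N)" by (rule Pmod[symmetric])
        also have "(- ((- n) mod int N)) mod int N = n" using n by (simp add: mod_minus_eq)
        finally show "c ((- n) mod int N) * \<Psi> n z = g ((- n) mod int N)" by (simp add: g_def)
      qed
      also have "\<dots> = (\<Sum>n\<in>{0..<int N}. g n)" by (rule sum_reflect[OF N0, symmetric])
      also have "\<dots> = (\<Sum>n\<in>{0..<int N}. c n * \<Psi> n (- z))"
        unfolding g_def using parP by (simp add: fun_eq_iff)
      also have "\<dots> = Z (- z)" using ZE SN by simp
      also have "\<dots> = - Z z" by (rule oddZ)
      also have "\<dots> = (\<Sum>n\<in>{0..<int N}. (- c n) * \<Psi> n z)" using ZE SN by (simp add: sum_negf)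
      finally show "(\<Sum>n\<in>{0..<int N}. c ((- n) mod int N) * \<Psi> n z) = (\<Sum>n\<in>{0..<int N}. (- c n) * \<Psi> n z)" .
    qed
    show ?thesis using onb_unique[OF onbP omU VcP E1] n SN by simp
  qed
  define G where "G g n = (1 / complex_of_real (sqrt (real N))) * (\<Sum>l\<in>{0..<int D}. g l * rt D (n * l))" for g n
  have Gcong: "G g n = G g n'" if "int D dvd n - n'" for g n n'
  proof -
    have "rt D (n * l) = rt D (n' * l)" for l
      by (rule rt_cong[OF D0]) (use that in \<open>simp add: left_diff_distrib[symmetric]\<close>)
    then show ?thesis by (simp add: G_def)
  qed
  have window: "c (n mod int N) = G g n"
    if gc: "gamma_cond (2 * a * b) lam mu k Z \<Psi> lo hi g" and n: "lo \<le> n" "n < hi" for g lo hi n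
  proof -
    have F: "(\<lambda>z. Z z - (\<Sum>l\<in>{0..<int D}. g l * Phi D k \<Psi> l z)) = (\<lambda>z. \<Sum>m\<in>{0..<int N}. (c m - G g m) * \<Psi> m z)"
    proof
      fix z
      have "(\<Sum>l\<in>{0..<int D}. g l * Phi D k \<Psi> l z) = (\<Sum>m\<in>{0..<int N}. G g m * \<Psi> m z)"
        using fun_cong[OF Phi_expand[where D=D and g=g and k=k and \<Psi>=\<Psi>], of z] by (simp add: G_def N_def)
      then show "Z z - (\<Sum>l\<in>{0..<int D}. g l * Phi D k \<Psi> l z) = (\<Sum>m\<in>{0..<int N}. (c m - G g m) * \<Psi> m z)"
        using ZE SN by (simp add: sum_subtractf left_diff_distrib)
    qed
    have "0 = sec_inner U lam (\<lambda>z. Z z - (\<Sum>l\<in>{0..<int D}. g l * Phi D k \<Psi> l z)) (\<Psi> n)"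
      using gc n by (simp add: gamma_cond_def U_def D_def)
    also have "\<dots> = sec_inner U lam (\<lambda>z. \<Sum>m\<in>{0..<int N}. (c m - G g m) * \<Psi> m z) (\<Psi> (n mod int N))"
      unfolding F Pmod ..
    also have "\<dots> = c (n mod int N) - G g (n mod int N)"
      by (rule onb_coeff[OF onbP omU VcP]) (use N0 in simp)
    also have "G g (n mod int N) = G g n"
    proof (rule Gcong)
      have "n mod int N - n = int D * (- (2 * int k) * (n div int N))"
        by (simp add: N_def minus_div_mult_eq_mod[symmetric] algebra_simps)
      then show "int D dvd n mod int N - n" by simp
    qed
    finally show ?thesis by simp
  qed
  define C where "C n = c (n mod int N)" for n
  have Csym: "C (- n) = - C n" for n
  proof -
    have "C (- n) = c ((- (n mod int N)) mod int N)" by (simp add: C_def mod_minus_eq)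
    also have "\<dots> = - c (n mod int N)" by (rule csym) (use N0 in \<open>simp add: S_def\<close>)
    finally show ?thesis by (simp add: C_def)
  qed
  have gpc': "gamma_cond (2 * a * b) lam mu k Z \<Psi> (- int (a * b) + int a + int b) (2 * int k - int (a * b) - int a - int b) gp"
    using gpc by (simp add: Z_def)
  have gmc': "gamma_cond (2 * a * b) lam mu k Z \<Psi> (- 2 * int k - int (a * b) + int a + int b) (- int (a * b) - int a - int b) gm"
    using gmc by (simp add: Z_def)
  have wp: "C n = G gp n" if "- int (a * b) + int a + int b \<le> n" "n < 2 * int k - int (a * b) - int a - int b" for n
    unfolding C_def by (rule window[OF gpc' that])
  have wm: "C n = G gm n" if "- 2 * int k - int (a * b) + int a + int b \<le> n" "n < - int (a * b) - int a - int b" for n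
    unfolding C_def by (rule window[OF gmc' that])
  have Dint: "int D = 2 * int (a * b)" by (simp add: D_def)
  have kbi: "int k \<ge> 2 * int (a * b) + int a + int b + 1" using kb by linarith
  define m0 where "m0 = - 2 * int k + int (a * b) + int a + int b + 1"
  have rel: "G gm m = - G gp (- m)" for m
  proof -
    define r where "r = (m - m0) mod int D"
    have r: "0 \<le> r" "r < int D" using D0 by (simp_all add: r_def)
    define m' where "m' = m0 + r"
    have dv: "int D dvd m - m'"
    proof -
      have "m - m' = int D * ((m - m0) div int D)" by (simp add: m'_def r_def minus_mod_eq_mult_div[symmetric] algebra_simps)
      then show ?thesis by simp
    qed
    have b1: "- 2 * int k - int (a * b) + int a + int b \<le> m'" "m' < - int (a * b) - int a - int b"
      using r kbi unfolding m'_def m0_def Dint by linarith+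
    have b2: "- int (a * b) + int a + int b \<le> - m'" "- m' < 2 * int k - int (a * b) - int a - int b"
      using r kbi unfolding m'_def m0_def Dint by linarith+
    have "G gm m = G gm m'" by (rule Gcong[OF dv])
    also have "\<dots> = C m'" using wm[OF b1] by simp
    also have "\<dots> = - C (- m')" using Csym[of m'] by simp
    also have "\<dots> = - G gp (- m')" using wp[OF b2] by simp
    also have "G gp (- m') = G gp (- m)" by (rule Gcong) (use dv in \<open>simp add: dvd_diff_commute\<close>)
    finally show ?thesis .
  qed
  define s where "s = 1 / complex_of_real (sqrt (real N))"
  have s0: "s \<noteq> 0" using N0 by (simp add: s_def)
  have key: "gm l0 = - gp ((- l0) mod int D)" if l0: "l0 \<in> {0..<int D}" for l0
  proof -
    have "(\<Sum>m\<in>{0..<int D}. G gm m * rt D (- (m * l0)))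
        = (\<Sum>m\<in>{0..<int D}. s * ((\<Sum>l\<in>{0..<int D}. gm l * rt D (m * l)) * rt D (- (m * l0))))"
      unfolding G_def s_def by (simp only: mult.assoc)
    also have "\<dots> = s * (\<Sum>m\<in>{0..<int D}. (\<Sum>l\<in>{0..<int D}. gm l * rt D (m * l)) * rt D (- (m * l0)))"
      by (rule sum_distrib_left[symmetric])
    also have "\<dots> = s * (of_nat D * gm l0)" by (simp add: dft_pos[OF D0 l0])
    finally have 1: "(\<Sum>m\<in>{0..<int D}. G gm m * rt D (- (m * l0))) = s * (of_nat D * gm l0)" .
    have "(\<Sum>m\<in>{0..<int D}. G gm m * rt D (- (m * l0))) = (\<Sum>m\<in>{0..<int D}. - (G gp (- m) * rt D (- (m * l0))))"
      by (simp add: rel)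
    also have "\<dots> = (\<Sum>m\<in>{0..<int D}. - s * ((\<Sum>l\<in>{0..<int D}. gp l * rt D (- (m * l))) * rt D (- (m * l0))))"
    proof (rule sum.cong[OF refl])
      fix m
      have "G gp (- m) = s * (\<Sum>l\<in>{0..<int D}. gp l * rt D (- (m * l)))"
        unfolding G_def s_def by simp
      then show "- (G gp (- m) * rt D (- (m * l0))) = - s * ((\<Sum>l\<in>{0..<int D}. gp l * rt D (- (m * l))) * rt D (- (m * l0)))"
        by (simp only: mult.assoc mult_minus_left)
    qed
    also have "\<dots> = - s * (\<Sum>m\<in>{0..<int D}. (\<Sum>l\<in>{0..<int D}. gp l * rt D (- (m * l))) * rt D (- (m * l0)))"
      by (rule sum_distrib_left[symmetric])
    also have "\<dots> = - s * (of_nat D * gp ((- l0) mod int D))" by (simp add: dft_neg[OF D0 l0])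
    finally have 2: "(\<Sum>m\<in>{0..<int D}. G gm m * rt D (- (m * l0))) = - s * (of_nat D * gp ((- l0) mod int D))" .
    have "s * (of_nat D * gm l0) = s * (of_nat D * (- gp ((- l0) mod int D)))" using 1 2 by simp
    then have e: "(s * of_nat D) * gm l0 = (s * of_nat D) * (- gp ((- l0) mod int D))" by (simp only: mult.assoc)
    have sd: "s * of_nat D \<noteq> 0" using s0 D0 by simp
    show ?thesis by (rule mult_left_cancel[OF sd, THEN iffD1, OF e])
  qed
  show ?thesis
  proof
    fix l assume l: "l \<in> {0..<int (2 * a * b)}"
    have l0: "(- l) mod int D \<in> {0..<int D}" using D0 by simp
    have "gm ((- l) mod int D) = - gp ((- ((- l) mod int D)) mod int D)" by (rule key[OF l0])
    also have "(- ((- l) mod int D)) mod int D = l" using l by (simp add: mod_minus_eq D_def)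
    finally show "gm ((- l) mod int (2 * a * b)) = - gp l" by (simp add: D_def)
  qed
qed

lemma psi_nonzero_eventually:
  fixes Om :: complex and P :: "nat \<Rightarrow> complex"
  assumes Om: "Om \<noteq> 0"
    and ni: "neg_k_infty (\<lambda>k. P k - exp (\<i> * of_real pi / 4) * complex_of_real ((real k / (2 * pi)) powr (1/4)) * Om)"
  shows "\<exists>K. \<forall>k\<ge>K. P k \<noteq> 0"
proof -
  obtain C K0 where CK: "\<forall>k\<ge>K0. norm (P k - exp (\<i> * of_real pi / 4) * complex_of_real ((real k / (2 * pi)) powr (1/4)) * Om) \<le> C * real k powr (- real (1::nat))"
    using ni unfolding neg_k_infty_def by blast
  define K where "K = max K0 (max 8 (nat \<lceil>C / norm Om\<rceil> + 1))"
  have "P k \<noteq> 0" if k: "k \<ge> K" for k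
  proof
    assume P0: "P k = 0"
    have kK0: "k \<ge> K0" and k7: "k \<ge> 8" and kC: "real k > C / norm Om"
      using k unfolding K_def by (auto simp: nat_le_iff) linarith
    have kpos: "real k > 0" using k7 by simp
    have "real k \<ge> 8" using k7 by simp
    then have "real k / (2 * pi) \<ge> 1" using pi_less_4 by (simp add: field_simps)
    then have r1: "(real k / (2 * pi)) powr (1/4) \<ge> 1" by (rule ge_one_powr_ge_zero) simp
    have ne: "norm (exp (\<i> * of_real pi / 4)) = 1"
      by (metis exp_of_real mult.commute norm_exp_i_times of_real_divide of_real_numeral times_divide_eq_right)
    have "norm (exp (\<i> * of_real pi / 4) * complex_of_real ((real k / (2 * pi)) powr (1/4)) * Om)
          = (real k / (2 * pi)) powr (1/4) * norm Om"
      using ne by (simp add: norm_mult)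
    also have "\<dots> \<ge> norm Om" using r1 by (simp add: mult_le_cancel_right1)
    finally have lo: "norm Om \<le> norm (exp (\<i> * of_real pi / 4) * complex_of_real ((real k / (2 * pi)) powr (1/4)) * Om)" .
    have "norm (exp (\<i> * of_real pi / 4) * complex_of_real ((real k / (2 * pi)) powr (1/4)) * Om) \<le> C * real k powr (- 1)"
      using CK kK0 P0 by (metis (no_types, lifting) diff_0 norm_minus_cancel of_nat_1 of_real_1)
    also have "\<dots> = C / real k" using kpos by (simp add: powr_minus divide_inverse)
    finally have "norm Om \<le> C / real k" using lo by linarith
    then have "norm Om * real k \<le> C" using kpos by (simp add: field_simps)
    moreover have "C < norm Om * real k" using kC Om kpos by (simp add: field_simps)
    ultimately show False by linarith
  qed
  then show ?thesis by blast
qed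

theorem mainTheorem10:
  fixes a b :: nat and lam mu Om_mu Om_lam :: complex
    and \<xi> \<Psi> :: "nat \<Rightarrow> int \<Rightarrow> complex \<Rightarrow> complex"
  assumes "0 < a" and "0 < b" and "coprime a b"
    and "omg mu lam = 4 * pi"
    and "is_Omega mu Om_mu"
    and "\<forall>k>0. xi_basis lam mu Om_mu k (\<xi> k)"
    and "is_Omega lam Om_lam"
    and "neg_k_infty (\<lambda>k. knot_state0 k (\<xi> k) 0
           - exp (3 * \<i> * of_real pi / 4) / complex_of_real (sqrt 2)
             * complex_of_real ((real k / (2 * pi)) powr (1/4)) * Om_lam)"
    and "\<forall>k>0. psi_basis (2 * a * b) lam mu k (\<Psi> k)"
    and "neg_k_infty (\<lambda>k. \<Psi> k 0 0
           - exp (\<i> * of_real pi / 4) * complex_of_real ((real k / (2 * pi)) powr (1/4)) * Om_lam)"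
  shows "\<exists>K. \<forall>k\<ge>K. \<forall>gp gm.
           gamma_cond (2 * a * b) lam mu k (knot_state a b k (\<xi> k)) (\<Psi> k)
              (- int (a * b) + int a + int b) (2 * int k - int (a * b) - int a - int b) gp
         \<and> gamma_cond (2 * a * b) lam mu k (knot_state a b k (\<xi> k)) (\<Psi> k)
              (- 2 * int k - int (a * b) + int a + int b) (- int (a * b) - int a - int b) gm
         \<longrightarrow> (\<forall>l\<in>{0..<int (2 * a * b)}. gm ((- l) mod int (2 * a * b)) = - gp l)"
proof -
  have OmM: "Om_mu \<noteq> 0" using assms(5) by (auto simp: is_Omega_def)
  have OmL: "Om_lam \<noteq> 0" using assms(7) by (auto simp: is_Omega_def)
  obtain K1 where K1: "\<forall>k\<ge>K1. \<Psi> k 0 0 \<noteq> 0"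
    using psi_nonzero_eventually[OF OmL, of "\<lambda>k. \<Psi> k 0 0"] assms(10) by blast
  show ?thesis
  proof (rule exI[of _ "max K1 (2 * a * b + a + b + 1)"], intro allI impI)
    fix k gp gm
    assume k: "max K1 (2 * a * b + a + b + 1) \<le> k"
    assume g: "gamma_cond (2 * a * b) lam mu k (knot_state a b k (\<xi> k)) (\<Psi> k)
              (- int (a * b) + int a + int b) (2 * int k - int (a * b) - int a - int b) gp
         \<and> gamma_cond (2 * a * b) lam mu k (knot_state a b k (\<xi> k)) (\<Psi> k)
              (- 2 * int k - int (a * b) + int a + int b) (- int (a * b) - int a - int b) gm"
    have k0: "k > 0" using k by simp
    show "\<forall>l\<in>{0..<int (2 * a * b)}. gm ((- l) mod int (2 * a * b)) = - gp l"
    proof (rule main_k[OF assms(1,2,3,4) OmM])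
      show "xi_basis lam mu Om_mu k (\<xi> k)" using assms(6) k0 by blast
      show "psi_basis (2 * a * b) lam mu k (\<Psi> k)" using assms(9) k0 by blast
      show "\<Psi> k 0 0 \<noteq> 0" using K1 k by simp
      show "k \<ge> 2 * a * b + a + b + 1" using k by simp
    qed (use g in auto)
  qed
qed

end
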